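(* Let $d$ be a square-free positive integer and $N=U^{\oplus2}\oplus E_8^{\oplus2}\oplus\langle-2\rangle\oplus\langle-2d\rangle$, and let $I_2(N)$ be the set of primitive isotropic rank-two sublattices of $N$. The natural map $I_2(N)/O^+(N)\to I_2(N)/O(N)$ is a bijection.
   Context: $O^+(N)$ is the index-two subgroup of $O(N)$ of isometries of real spinor norm $1$ (the real spinor norm of a product of reflections $\rho_{v_1}\cdots\rho_{v_m}$, $v_i\in N_{\mathbb R}$, is $\prod(-v_i^2/2)$ modulo squares). *)

theory Defs
  imports Complex_Main "HOL-Computational_Algebra.Squarefree"
begin

text \<open>The lattice N = U^2 + E8(-1)^2 + <-2> + <-2d> of rank 22, realised as Z^22,
  vectors being functions nat => int supported on {..<22}.
  Coordinates 0-1 and 2-3: hyperbolic planes U; 4-11 and 12-19: E8 (negative definite,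
  signature (2,20) convention); 20: <-2>; 21: <-2d>.\<close>

definition lat :: "(nat \<Rightarrow> int) set" where
  "lat = {x. \<forall>i\<ge>22. x i = 0}"

definition latR :: "(nat \<Rightarrow> real) set" where
  "latR = {x. \<forall>i\<ge>22. x i = 0}"

text \<open>Adjacency of the E8 Dynkin diagram (Bourbaki labelling, shifted to 0..7).\<close>
definition e8adj :: "nat \<Rightarrow> nat \<Rightarrow> bool" where
  "e8adj i j = ((i, j) \<in> {(0,2),(2,3),(3,4),(4,5),(5,6),(6,7),(1,3)} \<or>
                (j, i) \<in> {(0,2),(2,3),(3,4),(4,5),(5,6),(6,7),(1,3)})"

definition e8m :: "nat \<Rightarrow> nat \<Rightarrow> int" where
  "e8m i j = (if i = j then -2 else if e8adj i j then 1 else 0)"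

definition gram :: "nat \<Rightarrow> nat \<Rightarrow> nat \<Rightarrow> int" where
  "gram d i j =
     (if i < 4 \<and> j < 4 then (if i div 2 = j div 2 \<and> i \<noteq> j then 1 else 0)
      else if 4 \<le> i \<and> i < 12 \<and> 4 \<le> j \<and> j < 12 then e8m (i - 4) (j - 4)
      else if 12 \<le> i \<and> i < 20 \<and> 12 \<le> j \<and> j < 20 then e8m (i - 12) (j - 12)
      else if i = 20 \<and> j = 20 then -2
      else if i = 21 \<and> j = 21 then - 2 * int d
      else 0)"

definition bil :: "nat \<Rightarrow> (nat \<Rightarrow> int) \<Rightarrow> (nat \<Rightarrow> int) \<Rightarrow> int" where
  "bil d x y = (\<Sum>i<22. \<Sum>j<22. x i * gram d i j * y j)"

definition bilR :: "nat \<Rightarrow> (nat \<Rightarrow> real) \<Rightarrow> (nat \<Rightarrow> real) \<Rightarrow> real" where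
  "bilR d x y = (\<Sum>i<22. \<Sum>j<22. x i * of_int (gram d i j) * y j)"

definition mv :: "(nat \<Rightarrow> nat \<Rightarrow> int) \<Rightarrow> (nat \<Rightarrow> int) \<Rightarrow> (nat \<Rightarrow> int)" where
  "mv g x = (\<lambda>i. if i < 22 then (\<Sum>j<22. g i j * x j) else 0)"

definition mvR :: "(nat \<Rightarrow> nat \<Rightarrow> int) \<Rightarrow> (nat \<Rightarrow> real) \<Rightarrow> (nat \<Rightarrow> real)" where
  "mvR g x = (\<lambda>i. if i < 22 then (\<Sum>j<22. of_int (g i j) * x j) else 0)"

definition OrthN :: "nat \<Rightarrow> (nat \<Rightarrow> nat \<Rightarrow> int) set" where
  "OrthN d = {g. (\<forall>i j. (22 \<le> i \<or> 22 \<le> j) \<longrightarrow> g i j = 0) \<and>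
                 bij_betw (mv g) lat lat \<and>
                 (\<forall>x\<in>lat. \<forall>y\<in>lat. bil d (mv g x) (mv g y) = bil d x y)}"

definition reflR :: "nat \<Rightarrow> (nat \<Rightarrow> real) \<Rightarrow> (nat \<Rightarrow> real) \<Rightarrow> (nat \<Rightarrow> real)" where
  "reflR d v x = (\<lambda>i. x i - 2 * bilR d x v / bilR d v v * v i)"

text \<open>O^+(N): isometries of real spinor norm 1, i.e. which are a product of reflections
  rho_{v_1} ... rho_{v_m} (v_i in N_R, v_i^2 <> 0) with prod (- v_i^2 / 2) a positive real
  (a square in R^*).\<close>
definition OrthPlusN :: "nat \<Rightarrow> (nat \<Rightarrow> nat \<Rightarrow> int) set" where
  "OrthPlusN d = {g \<in> OrthN d. \<exists>vs :: (nat \<Rightarrow> real) list.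
       (\<forall>v\<in>set vs. v \<in> latR \<and> bilR d v v \<noteq> 0) \<and>
       (\<forall>x\<in>latR. mvR g x = foldr (\<lambda>v f. reflR d v \<circ> f) vs id x) \<and>
       (\<Prod>v\<leftarrow>vs. - bilR d v v / 2) > 0}"

definition I2 :: "nat \<Rightarrow> (nat \<Rightarrow> int) set set" where
  "I2 d = {L. (\<exists>e\<in>lat. \<exists>f\<in>lat.
              (\<forall>a b. (\<lambda>i. a * e i + b * f i) = (\<lambda>i. 0) \<longrightarrow> a = 0 \<and> b = 0) \<and>
              L = {(\<lambda>i. a * e i + b * f i) | a b. True}) \<and>
           (\<forall>x\<in>lat. \<forall>k::int. k \<noteq> 0 \<and> (\<lambda>i. k * x i) \<in> L \<longrightarrow> x \<in> L) \<and>
           (\<forall>x\<in>L. \<forall>y\<in>L. bil d x y = 0)}"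

definition orbrel :: "nat \<Rightarrow> (nat \<Rightarrow> nat \<Rightarrow> int) set \<Rightarrow> ((nat \<Rightarrow> int) set \<times> (nat \<Rightarrow> int) set) set" where
  "orbrel d H = {(L, L'). L \<in> I2 d \<and> L' \<in> I2 d \<and> (\<exists>g\<in>H. mv g ` L = L')}"

end

theory Submission
  imports Defs "HOL-Computational_Algebra.Squarefree"
begin


lemma sum22: "(\<Sum>i<(22::nat). f i) = f 0 + f 1 + f 2 + f 3 + f 4 + f 5 + f 6 + f 7 + f 8 + f 9 + f 10 + f 11 + f 12 + f 13 + f 14 + f 15 + f 16 + f 17 + f 18 + f 19 + f 20 + (f 21 :: 'a::comm_monoid_add)"
  by (simp add: sum.lessThan_Suc eval_nat_numeral)

lemma all22: "(\<forall>i<(22::nat). P i) \<longleftrightarrow> P 0 \<and> P 1 \<and> P 2 \<and> P 3 \<and> P 4 \<and> P 5 \<and> P 6 \<and> P 7 \<and> P 8 \<and> P 9 \<and> P 10 \<and> P 11 \<and> P 12 \<and> P 13 \<and> P 14 \<and> P 15 \<and> P 16 \<and> P 17 \<and> P 18 \<and> P 19 \<and> P 20 \<and> P 21"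
proof -
  have s: "\<And>n Q. (\<forall>i<Suc n. Q i) = ((\<forall>i<n. Q i) \<and> Q n)" by (auto simp: less_Suc_eq)
  show ?thesis by (simp add: s eval_nat_numeral conj_ac)
qed

definition e8f :: "nat \<Rightarrow> (nat \<Rightarrow> 'a::comm_ring_1) \<Rightarrow> (nat \<Rightarrow> 'a) \<Rightarrow> 'a" where
 "e8f s x y = -2 * (x s * y s + x (s+1) * y (s+1) + x (s+2) * y (s+2) + x (s+3) * y (s+3)
   + x (s+4) * y (s+4) + x (s+5) * y (s+5) + x (s+6) * y (s+6) + x (s+7) * y (s+7))
   + (x s * y (s+2) + x (s+2) * y s) + (x (s+2) * y (s+3) + x (s+3) * y (s+2))
   + (x (s+3) * y (s+4) + x (s+4) * y (s+3)) + (x (s+4) * y (s+5) + x (s+5) * y (s+4))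
   + (x (s+5) * y (s+6) + x (s+6) * y (s+5)) + (x (s+6) * y (s+7) + x (s+7) * y (s+6))
   + (x (s+1) * y (s+3) + x (s+3) * y (s+1))"

lemma bilR_explicit: "bilR d x y = x 0 * y 1 + x 1 * y 0 + x 2 * y 3 + x 3 * y 2 + e8f 4 x y + e8f 12 x y
   - 2 * x 20 * y 20 - 2 * of_nat d * x 21 * y 21"
  unfolding bilR_def sum22
  by (simp add: gram_def e8m_def e8adj_def e8f_def algebra_simps)

lemma bil_explicit: "bil d x y = x 0 * y 1 + x 1 * y 0 + x 2 * y 3 + x 3 * y 2 + e8f 4 x y + e8f 12 x y
   - 2 * x 20 * y 20 - 2 * of_nat d * x 21 * y 21"
  unfolding bil_def sum22
  by (simp add: gram_def e8m_def e8adj_def e8f_def algebra_simps)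


definition basT :: "nat \<Rightarrow> nat \<Rightarrow> real" where
  "basT k = (if k = 0 then (\<lambda>i. if i = 0 then (1) else if i = 1 then (1) else 0) else if k = 1 then (\<lambda>i. if i = 0 then (1) else if i = 1 then (-1) else 0) else if k = 2 then (\<lambda>i. if i = 2 then (1) else if i = 3 then (1) else 0) else if k = 3 then (\<lambda>i. if i = 2 then (1) else if i = 3 then (-1) else 0) else if k = 4 then (\<lambda>i. if i = 4 then (1) else 0) else if k = 5 then (\<lambda>i. if i = 5 then (1) else 0) else if k = 6 then (\<lambda>i. if i = 4 then (1) else if i = 6 then (2) else 0) else if k = 7 then (\<lambda>i. if i = 4 then (2) else if i = 5 then (3) else if i = 6 then (4) else if i = 7 then (6) else 0) else if k = 8 then (\<lambda>i. if i = 4 then (2) else if i = 5 then (3) else if i = 6 then (4) else if i = 7 then (6) else if i = 8 then (5) else 0) else if k = 9 then (\<lambda>i. if i = 4 then (2) else if i = 5 then (3) else if i = 6 then (4) else if i = 7 then (6) else if i = 8 then (5) else if i = 9 then (4) else 0) else if k = 10 then (\<lambda>i. if i = 4 then (2) else if i = 5 then (3) else if i = 6 then (4) else if i = 7 then (6) else if i = 8 then (5) else if i = 9 then (4) else if i = 10 then (3) else 0) else if k = 11 then (\<lambda>i. if i = 4 then (2) else if i = 5 then (3) else if i = 6 then (4) else if i = 7 then (6) else if i = 8 then (5) else if i = 9 then (4) else if i = 10 then (3) else if i = 11 then (2) else 0) else if k = 12 then (\<lambda>i. if i = 12 then (1) else 0) else if k = 13 then (\<lambda>i. if i = 13 then (1)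 else 0) else if k = 14 then (\<lambda>i. if i = 12 then (1) else if i = 14 then (2) else 0) else if k = 15 then (\<lambda>i. if i = 12 then (2) else if i = 13 then (3) else if i = 14 then (4) else if i = 15 then (6) else 0) else if k = 16 then (\<lambda>i. if i = 12 then (2) else if i = 13 then (3) else if i = 14 then (4) else if i = 15 then (6) else if i = 16 then (5) else 0) else if k = 17 then (\<lambda>i. if i = 12 then (2) else if i = 13 then (3) else if i = 14 then (4) else if i = 15 then (6) else if i = 16 then (5) else if i = 17 then (4) else 0) else if k = 18 then (\<lambda>i. if i = 12 then (2) else if i = 13 then (3) else if i = 14 then (4) else if i = 15 then (6) else if i = 16 then (5) else if i = 17 then (4) else if i = 18 then (3) else 0) else if k = 19 then (\<lambda>i. if i = 12 then (2) else if i = 13 then (3) else if i = 14 then (4) else if i = 15 then (6) else if i = 16 then (5) else if i = 17 then (4) else if i = 18 then (3) else if i = 19 then (2) else 0) else if k = 20 then (\<lambda>i. if i = 20 then (1) else 0) else if k = 21 then (\<lambda>i. if i = 21 then (1) else 0) else (\<lambda>i. 0))"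

definition bas :: "nat \<Rightarrow> nat \<Rightarrow> real" where
  "bas k = (\<lambda>i. if i < 22 then basT k i else 0)"

lemma bas_0: "bas 0 = (\<lambda>i. if i = 0 then (1) else if i = 1 then (1) else 0)" by (simp add: bas_def basT_def fun_eq_iff)

lemma bas_1s: "bas (Suc 0) = (\<lambda>i. if i = 0 then (1) else if i = 1 then (-1) else 0)" by (simp add: bas_def basT_def fun_eq_iff)

lemma bas_1: "bas 1 = (\<lambda>i. if i = 0 then (1) else if i = 1 then (-1) else 0)" by (simp add: bas_def basT_def fun_eq_iff)

lemma bas_2: "bas 2 = (\<lambda>i. if i = 2 then (1) else if i = 3 then (1) else 0)" by (simp add: bas_def basT_def fun_eq_iff)

lemma bas_3: "bas 3 = (\<lambda>i. if i = 2 then (1) else if i = 3 then (-1) else 0)" by (simp add: bas_def basT_def fun_eq_iff)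

lemma bas_4: "bas 4 = (\<lambda>i. if i = 4 then (1) else 0)" by (simp add: bas_def basT_def fun_eq_iff)

lemma bas_5: "bas 5 = (\<lambda>i. if i = 5 then (1) else 0)" by (simp add: bas_def basT_def fun_eq_iff)

lemma bas_6: "bas 6 = (\<lambda>i. if i = 4 then (1) else if i = 6 then (2) else 0)" by (simp add: bas_def basT_def fun_eq_iff)

lemma bas_7: "bas 7 = (\<lambda>i. if i = 4 then (2) else if i = 5 then (3) else if i = 6 then (4) else if i = 7 then (6) else 0)" by (simp add: bas_def basT_def fun_eq_iff)

lemma bas_8: "bas 8 = (\<lambda>i. if i = 4 then (2) else if i = 5 then (3) else if i = 6 then (4) else if i = 7 then (6) else if i = 8 then (5) else 0)" by (simp add: bas_def basT_def fun_eq_iff)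

lemma bas_9: "bas 9 = (\<lambda>i. if i = 4 then (2) else if i = 5 then (3) else if i = 6 then (4) else if i = 7 then (6) else if i = 8 then (5) else if i = 9 then (4) else 0)" by (simp add: bas_def basT_def fun_eq_iff)

lemma bas_10: "bas 10 = (\<lambda>i. if i = 4 then (2) else if i = 5 then (3) else if i = 6 then (4) else if i = 7 then (6) else if i = 8 then (5) else if i = 9 then (4) else if i = 10 then (3) else 0)" by (simp add: bas_def basT_def fun_eq_iff)

lemma bas_11: "bas 11 = (\<lambda>i. if i = 4 then (2) else if i = 5 then (3) else if i = 6 then (4) else if i = 7 then (6) else if i = 8 then (5) else if i = 9 then (4) else if i = 10 then (3) else if i = 11 then (2) else 0)" by (simp add: bas_def basT_def fun_eq_iff)

lemma bas_12: "bas 12 = (\<lambda>i. if i = 12 then (1) else 0)" by (simp add: bas_def basT_def fun_eq_iff)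

lemma bas_13: "bas 13 = (\<lambda>i. if i = 13 then (1) else 0)" by (simp add: bas_def basT_def fun_eq_iff)

lemma bas_14: "bas 14 = (\<lambda>i. if i = 12 then (1) else if i = 14 then (2) else 0)" by (simp add: bas_def basT_def fun_eq_iff)

lemma bas_15: "bas 15 = (\<lambda>i. if i = 12 then (2) else if i = 13 then (3) else if i = 14 then (4) else if i = 15 then (6) else 0)" by (simp add: bas_def basT_def fun_eq_iff)

lemma bas_16: "bas 16 = (\<lambda>i. if i = 12 then (2) else if i = 13 then (3) else if i = 14 then (4) else if i = 15 then (6) else if i = 16 then (5) else 0)" by (simp add: bas_def basT_def fun_eq_iff)

lemma bas_17: "bas 17 = (\<lambda>i. if i = 12 then (2) else if i = 13 then (3) else if i = 14 then (4) else if i = 15 then (6) else if i = 16 then (5) else if i = 17 then (4) else 0)" by (simp add: bas_def basT_def fun_eq_iff)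

lemma bas_18: "bas 18 = (\<lambda>i. if i = 12 then (2) else if i = 13 then (3) else if i = 14 then (4) else if i = 15 then (6) else if i = 16 then (5) else if i = 17 then (4) else if i = 18 then (3) else 0)" by (simp add: bas_def basT_def fun_eq_iff)

lemma bas_19: "bas 19 = (\<lambda>i. if i = 12 then (2) else if i = 13 then (3) else if i = 14 then (4) else if i = 15 then (6) else if i = 16 then (5) else if i = 17 then (4) else if i = 18 then (3) else if i = 19 then (2) else 0)" by (simp add: bas_def basT_def fun_eq_iff)

lemma bas_20: "bas 20 = (\<lambda>i. if i = 20 then (1) else 0)" by (simp add: bas_def basT_def fun_eq_iff)

lemma bas_21: "bas 21 = (\<lambda>i. if i = 21 then (1) else 0)" by (simp add: bas_def basT_def fun_eq_iff)

lemma bilb_0: "bilR d x (bas 0) = (1) * x 0 + (1) * x 1"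
  unfolding bilR_explicit bas_0 by (simp add: e8f_def algebra_simps)

lemma bilb_1: "bilR d x (bas 1) = (-1) * x 0 + (1) * x 1"
  unfolding bilR_explicit bas_1 by (simp add: e8f_def algebra_simps)

lemma bilb_2: "bilR d x (bas 2) = (1) * x 2 + (1) * x 3"
  unfolding bilR_explicit bas_2 by (simp add: e8f_def algebra_simps)

lemma bilb_3: "bilR d x (bas 3) = (-1) * x 2 + (1) * x 3"
  unfolding bilR_explicit bas_3 by (simp add: e8f_def algebra_simps)

lemma bilb_4: "bilR d x (bas 4) = (-2) * x 4 + (1) * x 6"
  unfolding bilR_explicit bas_4 by (simp add: e8f_def algebra_simps)

lemma bilb_5: "bilR d x (bas 5) = (-2) * x 5 + (1) * x 7"
  unfolding bilR_explicit bas_5 by (simp add: e8f_def algebra_simps)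

lemma bilb_6: "bilR d x (bas 6) = (-3) * x 6 + (2) * x 7"
  unfolding bilR_explicit bas_6 by (simp add: e8f_def algebra_simps)

lemma bilb_7: "bilR d x (bas 7) = (-5) * x 7 + (6) * x 8"
  unfolding bilR_explicit bas_7 by (simp add: e8f_def algebra_simps)

lemma bilb_8: "bilR d x (bas 8) = (-4) * x 8 + (5) * x 9"
  unfolding bilR_explicit bas_8 by (simp add: e8f_def algebra_simps)

lemma bilb_9: "bilR d x (bas 9) = (-3) * x 9 + (4) * x 10"
  unfolding bilR_explicit bas_9 by (simp add: e8f_def algebra_simps)

lemma bilb_10: "bilR d x (bas 10) = (-2) * x 10 + (3) * x 11"
  unfolding bilR_explicit bas_10 by (simp add: e8f_def algebra_simps)

lemma bilb_11: "bilR d x (bas 11) = (-1) * x 11"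
  unfolding bilR_explicit bas_11 by (simp add: e8f_def algebra_simps)

lemma bilb_12: "bilR d x (bas 12) = (-2) * x 12 + (1) * x 14"
  unfolding bilR_explicit bas_12 by (simp add: e8f_def algebra_simps)

lemma bilb_13: "bilR d x (bas 13) = (-2) * x 13 + (1) * x 15"
  unfolding bilR_explicit bas_13 by (simp add: e8f_def algebra_simps)

lemma bilb_14: "bilR d x (bas 14) = (-3) * x 14 + (2) * x 15"
  unfolding bilR_explicit bas_14 by (simp add: e8f_def algebra_simps)

lemma bilb_15: "bilR d x (bas 15) = (-5) * x 15 + (6) * x 16"
  unfolding bilR_explicit bas_15 by (simp add: e8f_def algebra_simps)

lemma bilb_16: "bilR d x (bas 16) = (-4) * x 16 + (5) * x 17"
  unfolding bilR_explicit bas_16 by (simp add: e8f_def algebra_simps)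

lemma bilb_17: "bilR d x (bas 17) = (-3) * x 17 + (4) * x 18"
  unfolding bilR_explicit bas_17 by (simp add: e8f_def algebra_simps)

lemma bilb_18: "bilR d x (bas 18) = (-2) * x 18 + (3) * x 19"
  unfolding bilR_explicit bas_18 by (simp add: e8f_def algebra_simps)

lemma bilb_19: "bilR d x (bas 19) = (-1) * x 19"
  unfolding bilR_explicit bas_19 by (simp add: e8f_def algebra_simps)

lemma bilb_20: "bilR d x (bas 20) = (-2) * x 20"
  unfolding bilR_explicit bas_20 by (simp add: e8f_def algebra_simps)

lemma bilb_21: "bilR d x (bas 21) = (-2) * of_nat d * x 21"
  unfolding bilR_explicit bas_21 by (simp add: e8f_def algebra_simps)

lemmas bilb = bilb_0 bilb_1 bilb_2 bilb_3 bilb_4 bilb_5 bilb_6 bilb_7 bilb_8 bilb_9 bilb_10 bilb_11 bilb_12 bilb_13 bilb_14 bilb_15 bilb_16 bilb_17 bilb_18 bilb_19 bilb_20 bilb_21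

lemmas bas_k = bas_1s bas_0 bas_1 bas_2 bas_3 bas_4 bas_5 bas_6 bas_7 bas_8 bas_9 bas_10 bas_11 bas_12 bas_13 bas_14 bas_15 bas_16 bas_17 bas_18 bas_19 bas_20 bas_21

lemma bas_latR: "bas k \<in> latR"
  by (simp add: bas_def latR_def)

lemma bas_orth: "i < 22 \<Longrightarrow> k < 22 \<Longrightarrow> i \<noteq> k \<Longrightarrow> bilR d (bas i) (bas k) = 0"
proof -
  have "\<forall>k<22. \<forall>i<22. i \<noteq> k \<longrightarrow> bilR d (bas i) (bas k) = 0"
    unfolding all22 bilb by (simp add: bas_k)
  then show "i < 22 \<Longrightarrow> k < 22 \<Longrightarrow> i \<noteq> k \<Longrightarrow> bilR d (bas i) (bas k) = 0" by blast
qed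

lemma bas_norm: "d > 0 \<Longrightarrow> k < 22 \<Longrightarrow> bilR d (bas k) (bas k) \<noteq> 0"
proof -
  assume "d > 0"
  have "\<forall>k<22. bilR d (bas k) (bas k) \<noteq> 0"
    unfolding all22 bilb using \<open>d > 0\<close> by (simp add: bas_k)
  then show "k < 22 \<Longrightarrow> bilR d (bas k) (bas k) \<noteq> 0" by blast
qed

lemma bas_nondeg:
  assumes "d > 0" "z \<in> latR" "\<And>k. k < 22 \<Longrightarrow> bilR d z (bas k) = 0"
  shows "z = (\<lambda>i. 0)"
proof -
  have h: "\<forall>k<22. bilR d z (bas k) = 0" using assms(3) by blast
  note h' = h[unfolded all22 bilb]
  have z21: "z 21 = 0" using h' assms(1) by simp
  have "\<forall>i<22. z i = 0" unfolding all22 using h' z21 by linarith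
  moreover have "\<forall>i\<ge>22. z i = 0" using assms(2) by (simp add: latR_def)
  ultimately show ?thesis by (metis not_le)
qed


lemma e8adj_sym: "e8adj i j = e8adj j i" unfolding e8adj_def by (rule disj_commute)
lemma e8m_sym: "e8m i j = e8m j i" unfolding e8m_def by (cases "i = j") (simp_all add: e8adj_sym)
lemma gram_sym: "gram d i j = gram d j i"
  unfolding gram_def by (auto simp: e8m_sym)

lemma bilR_sym: "bilR d x y = bilR d y x"
  unfolding bilR_def
  by (subst sum.swap) (simp add: gram_sym mult.commute mult.left_commute)

lemma bilR_lin: "bilR d (\<lambda>i. a * x i + b * y i) z = a * bilR d x z + b * bilR d y z"
  by (simp add: bilR_def sum.distrib sum_distrib_left algebra_simps)

lemma bilR_add: "bilR d (\<lambda>i. x i + y i) z = bilR d x z + bilR d y z"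
  using bilR_lin[of d 1 x 1 y z] by simp

lemma bilR_diff: "bilR d (\<lambda>i. x i - y i) z = bilR d x z - bilR d y z"
  using bilR_lin[of d 1 x "-1" y z] by simp

lemma bilR_scale: "bilR d (\<lambda>i. a * x i) z = a * bilR d x z"
  using bilR_lin[of d a x 0 x z] by simp

lemma bilR_neg: "bilR d (\<lambda>i. - x i) z = - bilR d x z"
  using bilR_lin[of d "-1" x 0 x z] by simp

lemma bilR_add2: "bilR d z (\<lambda>i. x i + y i) = bilR d z x + bilR d z y"
  by (metis bilR_add bilR_sym)
lemma bilR_diff2: "bilR d z (\<lambda>i. x i - y i) = bilR d z x - bilR d z y"
  by (metis bilR_diff bilR_sym)
lemma bilR_scale2: "bilR d z (\<lambda>i. a * x i) = a * bilR d z x"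
  by (metis bilR_scale bilR_sym)

lemma latR_diff: "x \<in> latR \<Longrightarrow> y \<in> latR \<Longrightarrow> (\<lambda>i. x i - y i) \<in> latR"
  by (simp add: latR_def)
lemma latR_add: "x \<in> latR \<Longrightarrow> y \<in> latR \<Longrightarrow> (\<lambda>i. x i + y i) \<in> latR"
  by (simp add: latR_def)
lemma latR_refl: "x \<in> latR \<Longrightarrow> v \<in> latR \<Longrightarrow> reflR d v x \<in> latR"
  by (simp add: latR_def reflR_def)

lemma refl_bil: "bilR d (reflR d v x) z = bilR d x z - 2 * bilR d x v / bilR d v v * bilR d v z"
  unfolding reflR_def by (simp only: bilR_diff bilR_scale)

lemma refl_iso: assumes "bilR d v v \<noteq> 0"
  shows "bilR d (reflR d v x) (reflR d v y) = bilR d x y"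
proof -
  have "bilR d (reflR d v x) (reflR d v y) = bilR d x (reflR d v y) - 2 * bilR d x v / bilR d v v * bilR d v (reflR d v y)"
    by (rule refl_bil)
  also have "\<dots> = bilR d x y" 
    using assms
    by (simp add: bilR_sym[of d _ "reflR d v y"] refl_bil bilR_sym[of d y v] bilR_sym[of d x v] field_simps)
       (simp add: bilR_sym[of d y x] algebra_simps)
  finally show ?thesis .
qed

lemma refl_invol: assumes "bilR d v v \<noteq> 0"
  shows "reflR d v (reflR d v x) = x"
proof -
  have "bilR d (reflR d v x) v = - bilR d x v" using assms by (simp add: refl_bil)
  then show ?thesis using assms by (simp add: reflR_def[of d v "reflR d v x"]) (simp add: reflR_def)
qed

lemma refl_fix: "bilR d x v = 0 \<Longrightarrow> reflR d v x = x"
  by (simp add: reflR_def)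

definition isoR :: "nat \<Rightarrow> ((nat \<Rightarrow> real) \<Rightarrow> (nat \<Rightarrow> real)) \<Rightarrow> bool" where
  "isoR d F \<longleftrightarrow> (\<forall>x\<in>latR. F x \<in> latR) \<and> (\<forall>x\<in>latR. \<forall>y\<in>latR. bilR d (F x) (F y) = bilR d x y)"

definition decomp :: "nat \<Rightarrow> ((nat \<Rightarrow> real) \<Rightarrow> (nat \<Rightarrow> real)) \<Rightarrow> (nat \<Rightarrow> real) list \<Rightarrow> bool" where
  "decomp d F vs \<longleftrightarrow> (\<forall>v\<in>set vs. v \<in> latR \<and> bilR d v v \<noteq> 0) \<and>
       (\<forall>x\<in>latR. F x = foldr (\<lambda>v f. reflR d v \<circ> f) vs id x)"

lemma isoR_comp_refl: "isoR d F \<Longrightarrow> v \<in> latR \<Longrightarrow> bilR d v v \<noteq> 0 \<Longrightarrow> isoR d (reflR d v \<circ> F)"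
  by (simp add: isoR_def latR_refl refl_iso)

lemma decomp_cons: assumes "decomp d F' vs" "v \<in> latR" "bilR d v v \<noteq> 0"
   "\<And>x. x \<in> latR \<Longrightarrow> F x = reflR d v (F' x)"
  shows "decomp d F (v # vs)"
  using assms by (simp add: decomp_def)

lemma cartan_gen:
  fixes b :: "nat \<Rightarrow> nat \<Rightarrow> real"
  assumes B1: "\<forall>k<22. b k \<in> latR" and B2: "\<forall>k<22. bilR d (b k) (b k) \<noteq> 0"
    and B3: "\<forall>i<22. \<forall>k<22. i \<noteq> k \<longrightarrow> bilR d (b i) (b k) = 0"
    and B4: "\<forall>z\<in>latR. (\<forall>k<22. bilR d z (b k) = 0) \<longrightarrow> z = (\<lambda>i. 0)"
  shows "\<forall>k F. 22 - k = n \<longrightarrow> k \<le> 22 \<longrightarrow> isoR d F \<longrightarrow> (\<forall>i<k. F (b i) = b i) \<longrightarrow> (\<exists>vs. decomp d F vs)"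
proof (induction n)
  case 0
  show ?case
  proof (intro allI impI)
    fix k F assume k: "22 - k = 0" "k \<le> 22" and iso: "isoR d F" and fx: "\<forall>i<k. F (b i) = b i"
    have "F x = x" if x: "x \<in> latR" for x
    proof -
      have "(\<lambda>i. F x i - x i) = (\<lambda>i. 0)"
      proof (rule B4[rule_format])
        show "(\<lambda>i. F x i - x i) \<in> latR" using iso x by (simp add: isoR_def latR_diff)
        fix j assume j: "j < (22::nat)"
        have "F (b j) = b j" using fx j k by auto
        then have "bilR d (F x) (b j) = bilR d x (b j)"
          using iso x B1 j by (metis isoR_def)
        then show "bilR d (\<lambda>i. F x i - x i) (b j) = 0" by (simp add: bilR_diff)
      qed
      then show ?thesis by (metis right_minus_eq ext)
    qed
    then have "decomp d F []" by (simp add: decomp_def)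
    then show "\<exists>vs. decomp d F vs" by blast
  qed
next
  case (Suc m)
  show ?case
  proof (intro allI impI)
    fix k F assume k: "22 - k = Suc m" "k \<le> 22" and iso: "isoR d F" and fx: "\<forall>i<k. F (b i) = b i"
    have kl: "k < 22" using k by auto
    define x where "x = b k"
    have xl: "x \<in> latR" using B1 kl x_def by auto
    have xx: "bilR d x x \<noteq> 0" using B2 kl x_def by auto
    have Fxl: "F x \<in> latR" using iso xl by (simp add: isoR_def)
    have FF: "bilR d (F x) (F x) = bilR d x x" using iso xl by (simp add: isoR_def)
    have orth: "bilR d (b i) x = 0" if "i < k" for i using B3 that kl x_def by auto
    have Fbi: "bilR d (b i) (F x) = 0" if "i < k" for i
    proof -
      have "bilR d (b i) (F x) = bilR d (F (b i)) (F x)" using fx that by simp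
      also have "\<dots> = bilR d (b i) x" using iso xl B1 that kl by (simp add: isoR_def)
      finally show ?thesis using orth that by simp
    qed
    define w where "w = (\<lambda>i. F x i - x i)"
    have wl: "w \<in> latR" using Fxl xl by (simp add: w_def latR_diff)
    have ww: "bilR d w w = 2 * bilR d x x - 2 * bilR d (F x) x"
      unfolding w_def by (simp add: bilR_diff bilR_diff2 FF bilR_sym[of d x "F x"])
    show "\<exists>vs. decomp d F vs"
    proof (cases "bilR d w w = 0")
      case False
      note ww0 = this
      define F' where "F' = reflR d w \<circ> F"
      have iso': "isoR d F'" unfolding F'_def using iso wl False by (rule isoR_comp_refl)
      have fix': "\<forall>i<Suc k. F' (b i) = b i"
      proof (intro allI impI)
        fix i assume i: "i < Suc k"
        show "F' (b i) = b i"
        proof (cases "i < k")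
          case True
          have "bilR d (b i) w = 0" unfolding w_def using Fbi[OF True] orth[OF True] by (simp add: bilR_diff2)
          then show ?thesis using fx True by (simp add: F'_def refl_fix)
        next
          case False
          then have ik: "i = k" using i by auto
          have "bilR d (F x) w = bilR d w w / 2"
          proof -
            have "bilR d (F x) w = bilR d x x - bilR d (F x) x" unfolding w_def by (simp add: bilR_diff2 FF)
            then show ?thesis using ww by simp
          qed
          then have c: "2 * bilR d (F x) w / bilR d w w = 1" using ww0 by simp
          have "reflR d w (F x) = (\<lambda>j. F x j - w j)"
            unfolding reflR_def by (simp only: c) simp
          then show ?thesis using ik by (simp add: F'_def w_def x_def)
        qed
      qed
      have km: "22 - Suc k = m" "Suc k \<le> 22" using k by auto
      from Suc.IH km iso' fix' obtain vs where vs: "decomp d F' vs" by blast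
      have "decomp d F (w # vs)"
      proof (rule decomp_cons[OF vs wl False])
        fix y assume "y \<in> latR"
        then show "F y = reflR d w (F' y)" by (simp add: F'_def refl_invol[OF False])
      qed
      then show ?thesis by blast
    next
      case True
      define u where "u = (\<lambda>i. F x i + x i)"
      have ul: "u \<in> latR" using Fxl xl by (simp add: u_def latR_add)
      have Fxx: "bilR d (F x) x = bilR d x x" using True ww by simp
      have uu: "bilR d u u = 4 * bilR d x x"
      proof -
        have "bilR d u u = bilR d (F x) (F x) + bilR d (F x) x + (bilR d x (F x) + bilR d x x)"
          unfolding u_def by (simp only: bilR_add bilR_add2)
        then show ?thesis by (simp add: FF Fxx bilR_sym[of d x "F x"])
      qed
      have uu0: "bilR d u u \<noteq> 0" using uu xx by simp
      define F' where "F' = reflR d x \<circ> (reflR d u \<circ> F)"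
      have iso': "isoR d F'" unfolding F'_def
        by (rule isoR_comp_refl[OF isoR_comp_refl[OF iso ul uu0] xl xx])
      have fix': "\<forall>i<Suc k. F' (b i) = b i"
      proof (intro allI impI)
        fix i assume i: "i < Suc k"
        show "F' (b i) = b i"
        proof (cases "i < k")
          case True
          have "bilR d (b i) u = 0" unfolding u_def using Fbi[OF True] orth[OF True] by (simp add: bilR_add2)
          then show ?thesis using fx True orth[OF True] by (simp add: F'_def refl_fix)
        next
          case False
          then have ik: "i = k" using i by auto
          have "bilR d (F x) u = 2 * bilR d x x"
            unfolding u_def by (simp add: bilR_add2 FF Fxx)
          then have c: "2 * bilR d (F x) u / bilR d u u = 1" using uu xx by simp
          have r1: "reflR d u (F x) = (\<lambda>j. - x j)"
            unfolding reflR_def by (simp only: c) (simp add: u_def)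
          have "bilR d (\<lambda>j. - x j) x = - bilR d x x" by (simp add: bilR_neg)
          then have c2: "2 * bilR d (\<lambda>j. - x j) x / bilR d x x = -2" using xx by simp
          have "reflR d x (\<lambda>j. - x j) = x"
            unfolding reflR_def by (simp only: c2) simp
          then show ?thesis using ik r1 by (simp add: F'_def x_def)
        qed
      qed
      have km: "22 - Suc k = m" "Suc k \<le> 22" using k by auto
      from Suc.IH km iso' fix' obtain vs where vs: "decomp d F' vs" by blast
      have "decomp d F (u # x # vs)"
      proof (rule decomp_cons[OF _ ul uu0])
        show "decomp d (reflR d x \<circ> F') (x # vs)"
          by (rule decomp_cons[OF vs xl xx]) simp
        fix y assume "y \<in> latR"
        then show "F y = reflR d u ((reflR d x \<circ> F') y)"
          by (simp add: F'_def refl_invol[OF xx] refl_invol[OF uu0])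
      qed
      then show ?thesis by blast
    qed
  qed
qed


definition mmul :: "(nat \<Rightarrow> nat \<Rightarrow> int) \<Rightarrow> (nat \<Rightarrow> nat \<Rightarrow> int) \<Rightarrow> nat \<Rightarrow> nat \<Rightarrow> int" where
  "mmul g h = (\<lambda>i j. if i < 22 \<and> j < 22 then (\<Sum>k<22. g i k * h k j) else 0)"

definition idm :: "nat \<Rightarrow> nat \<Rightarrow> int" where
  "idm = (\<lambda>i j. if i = j \<and> i < 22 then 1 else 0)"

lemma mv_mmul: "mv (mmul g h) x = mv g (mv h x)"
proof
  fix i
  show "mv (mmul g h) x i = mv g (mv h x) i"
  proof (cases "i < 22")
    case True
    have "mv g (mv h x) i = (\<Sum>k<22. g i k * (\<Sum>j<22. h k j * x j))"
      using True by (simp add: mv_def)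
    also have "\<dots> = (\<Sum>k<22. \<Sum>j<22. g i k * h k j * x j)"
      by (simp add: sum_distrib_left mult.assoc)
    also have "\<dots> = (\<Sum>j<22. \<Sum>k<22. g i k * h k j * x j)"
      by (rule sum.swap)
    also have "\<dots> = (\<Sum>j<22. (\<Sum>k<22. g i k * h k j) * x j)"
      by (simp add: sum_distrib_right)
    also have "\<dots> = mv (mmul g h) x i"
      using True by (simp add: mv_def mmul_def)
    finally show ?thesis by simp
  next
    case False
    then show ?thesis by (simp add: mv_def)
  qed
qed

lemma mvR_mmul: "mvR (mmul g h) x = mvR g (mvR h x)"
proof
  fix i
  show "mvR (mmul g h) x i = mvR g (mvR h x) i"
  proof (cases "i < 22")
    case True
    have "mvR g (mvR h x) i = (\<Sum>k<22. of_int (g i k) * (\<Sum>j<22. of_int (h k j) * x j))"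
      using True by (simp add: mvR_def)
    also have "\<dots> = (\<Sum>k<22. \<Sum>j<22. of_int (g i k) * of_int (h k j) * x j)"
      by (simp add: sum_distrib_left mult.assoc)
    also have "\<dots> = (\<Sum>j<22. \<Sum>k<22. of_int (g i k) * of_int (h k j) * x j)"
      by (rule sum.swap)
    also have "\<dots> = (\<Sum>j<22. (\<Sum>k<22. of_int (g i k) * of_int (h k j)) * x j)"
      by (simp add: sum_distrib_right)
    also have "\<dots> = mvR (mmul g h) x i"
      using True by (simp add: mvR_def mmul_def)
    finally show ?thesis by simp
  next
    case False
    then show ?thesis by (simp add: mvR_def)
  qed
qed

lemma mv_lat: "mv g x \<in> lat" by (simp add: mv_def lat_def)
lemma mvR_latR: "mvR g x \<in> latR" by (simp add: mvR_def latR_def)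

lemma mv_idm: assumes "x \<in> lat" shows "mv idm x = x"
proof
  fix i show "mv idm x i = x i"
  proof (cases "i < 22")
    case True
    have "(\<Sum>j<22. idm i j * x j) = (\<Sum>j<22. if i = j then x j else 0)"
      by (rule sum.cong) (auto simp: idm_def True)
    also have "\<dots> = x i" using True by (simp add: sum.delta)
    finally show ?thesis using True by (simp add: mv_def)
  next
    case False then show ?thesis using assms by (simp add: mv_def lat_def)
  qed
qed

lemma mvR_idm: assumes "x \<in> latR" shows "mvR idm x = x"
proof
  fix i show "mvR idm x i = x i"
  proof (cases "i < 22")
    case True
    have "(\<Sum>j<22. of_int (idm i j) * x j) = (\<Sum>j<22. if i = j then x j else 0)"
      by (rule sum.cong) (auto simp: idm_def True)
    also have "\<dots> = x i" using True by (simp add: sum.delta)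
    finally show ?thesis using True by (simp add: mvR_def)
  next
    case False then show ?thesis using assms by (simp add: mvR_def latR_def)
  qed
qed

lemma idm_OrthN: "idm \<in> OrthN d"
proof -
  have "bij_betw id lat lat" by simp
  then have "bij_betw (mv idm) lat lat" by (rule bij_betw_cong[THEN iffD1, rotated]) (simp add: mv_idm)
  then show ?thesis unfolding OrthN_def by (auto simp: mv_idm) (simp_all add: idm_def)
qed

lemma mmul_OrthN: assumes "g \<in> OrthN d" "h \<in> OrthN d" shows "mmul g h \<in> OrthN d"
proof -
  have bg: "bij_betw (mv g) lat lat" and bh: "bij_betw (mv h) lat lat"
    and ig: "\<forall>x\<in>lat. \<forall>y\<in>lat. bil d (mv g x) (mv g y) = bil d x y"
    and ih: "\<forall>x\<in>lat. \<forall>y\<in>lat. bil d (mv h x) (mv h y) = bil d x y"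
    using assms unfolding OrthN_def by blast+
  have "bij_betw (mv g \<circ> mv h) lat lat" using bh bg by (rule bij_betw_trans)
  moreover have "mv g \<circ> mv h = mv (mmul g h)" by (simp add: fun_eq_iff mv_mmul)
  ultimately have b: "bij_betw (mv (mmul g h)) lat lat" by simp
  have i: "\<forall>x\<in>lat. \<forall>y\<in>lat. bil d (mv (mmul g h) x) (mv (mmul g h) y) = bil d x y"
  proof (intro ballI)
    fix x y assume "x \<in> lat" "y \<in> lat"
    then show "bil d (mv (mmul g h) x) (mv (mmul g h) y) = bil d x y"
      using ig ih mv_lat[of h x] mv_lat[of h y] by (simp add: mv_mmul)
  qed
  have z: "\<forall>i j. (22 \<le> i \<or> 22 \<le> j) \<longrightarrow> mmul g h i j = 0" by (simp add: mmul_def)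
  show ?thesis unfolding OrthN_def using b i z by blast
qed

lemma foldr_comp: "foldr (\<lambda>v f. r v \<circ> f) xs g = foldr (\<lambda>v f. r v \<circ> f) xs id \<circ> g"
  by (induction xs) (simp_all add: o_assoc)

lemma foldr_app: "foldr (\<lambda>v f. r v \<circ> f) (xs @ ys) id x = foldr (\<lambda>v f. r v \<circ> f) xs id (foldr (\<lambda>v f. r v \<circ> f) ys id x)"
proof -
  have "foldr (\<lambda>v f. r v \<circ> f) (xs @ ys) id = foldr (\<lambda>v f. r v \<circ> f) xs (foldr (\<lambda>v f. r v \<circ> f) ys id)" by simp
  also have "\<dots> = foldr (\<lambda>v f. r v \<circ> f) xs id \<circ> foldr (\<lambda>v f. r v \<circ> f) ys id" by (rule foldr_comp)
  finally show ?thesis by simp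
qed

lemma idm_OrthPlusN: "idm \<in> OrthPlusN d"
proof -
  have "\<forall>x\<in>latR. mvR idm x = foldr (\<lambda>v f. reflR d v \<circ> f) [] id x" by (simp add: mvR_idm)
  then show ?thesis using idm_OrthN unfolding OrthPlusN_def
    by (intro CollectI conjI exI[of _ "[]"]) simp_all
qed

lemma mmul_OrthPlusN_gen:
  assumes "g \<in> OrthN d" "h \<in> OrthN d"
    and "decomp d (mvR g) vs" "decomp d (mvR h) ws"
    and "(\<Prod>v\<leftarrow>vs @ ws. - bilR d v v / 2) > 0"
  shows "mmul g h \<in> OrthPlusN d"
proof -
  have "mmul g h \<in> OrthN d" using assms(1,2) by (rule mmul_OrthN)
  moreover have "\<forall>v\<in>set (vs @ ws). v \<in> latR \<and> bilR d v v \<noteq> 0" using assms(3,4) by (auto simp: decomp_def)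
  moreover have "\<forall>x\<in>latR. mvR (mmul g h) x = foldr (\<lambda>v f. reflR d v \<circ> f) (vs @ ws) id x"
  proof
    fix x assume x: "x \<in> latR"
    have "mvR (mmul g h) x = mvR g (mvR h x)" by (rule mvR_mmul)
    also have "\<dots> = foldr (\<lambda>v f. reflR d v \<circ> f) vs id (foldr (\<lambda>v f. reflR d v \<circ> f) ws id x)"
    proof -
      have e1: "mvR h x = foldr (\<lambda>v f. reflR d v \<circ> f) ws id x" using assms(4) x by (simp add: decomp_def)
      have e2: "mvR g (mvR h x) = foldr (\<lambda>v f. reflR d v \<circ> f) vs id (mvR h x)"
        using assms(3) mvR_latR[of h x] unfolding decomp_def by blast
      show ?thesis using e1 e2 by simp
    qed
    also have "\<dots> = foldr (\<lambda>v f. reflR d v \<circ> f) (vs @ ws) id x" by (rule foldr_app[symmetric])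
    finally show "mvR (mmul g h) x = foldr (\<lambda>v f. reflR d v \<circ> f) (vs @ ws) id x" .
  qed
  ultimately show ?thesis using assms(5) unfolding OrthPlusN_def by blast
qed

lemma OrthPlusN_decomp: "g \<in> OrthPlusN d \<Longrightarrow> \<exists>vs. decomp d (mvR g) vs \<and> (\<Prod>v\<leftarrow>vs. - bilR d v v / 2) > 0"
  by (auto simp: OrthPlusN_def decomp_def)

lemma mmul_OrthPlusN: assumes "g \<in> OrthPlusN d" "h \<in> OrthPlusN d" shows "mmul g h \<in> OrthPlusN d"
proof -
  obtain vs where vs: "decomp d (mvR g) vs" "(\<Prod>v\<leftarrow>vs. - bilR d v v / 2) > 0" using OrthPlusN_decomp[OF assms(1)] by blast
  obtain ws where ws: "decomp d (mvR h) ws" "(\<Prod>v\<leftarrow>ws. - bilR d v v / 2) > 0" using OrthPlusN_decomp[OF assms(2)] by blast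
  have "(\<Prod>v\<leftarrow>vs @ ws. - bilR d v v / 2) > 0" using vs(2) ws(2) by simp
  moreover have "g \<in> OrthN d" "h \<in> OrthN d" using assms unfolding OrthPlusN_def by blast+
  ultimately show ?thesis using mmul_OrthPlusN_gen vs(1) ws(1) by blast
qed


definition ri :: "(nat \<Rightarrow> int) \<Rightarrow> (nat \<Rightarrow> real)" where
  "ri x = (\<lambda>i. of_int (x i))"

lemma bilR_ri: "bilR d (ri x) (ri y) = of_int (bil d x y)"
  by (simp add: bilR_def bil_def ri_def)

lemma mvR_ri: "mvR g (ri x) = ri (mv g x)"
  by (simp add: mvR_def mv_def ri_def fun_eq_iff)

lemma ri_latR: "x \<in> lat \<Longrightarrow> ri x \<in> latR"
  by (simp add: lat_def latR_def ri_def)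

lemma ri_inj: "ri x = ri y \<Longrightarrow> x = y"
  by (simp add: ri_def fun_eq_iff)

definition unitI :: "nat \<Rightarrow> nat \<Rightarrow> int" where
  "unitI a = (\<lambda>j. if j = a then 1 else 0)"

lemma unitI_lat: "a < 22 \<Longrightarrow> unitI a \<in> lat"
  by (simp add: unitI_def lat_def)

lemma sum_unitI: "a < 22 \<Longrightarrow> (\<Sum>j<22. f j * unitI a j) = (f a :: int)"
proof -
  assume a: "a < 22"
  have "(\<Sum>j<22. f j * unitI a j) = (\<Sum>j<22. if a = j then f j else 0)"
    by (rule sum.cong) (auto simp: unitI_def)
  also have "\<dots> = f a" using a by (simp add: sum.delta)
  finally show ?thesis .
qed

lemma sum_unitI': "a < 22 \<Longrightarrow> (\<Sum>j<22. unitI a j * f j) = (f a :: int)"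
  using sum_unitI[of a f] by (simp add: mult.commute)

lemma mv_unitI: "a < 22 \<Longrightarrow> mv g (unitI a) = (\<lambda>i. if i < 22 then g i a else 0)"
  by (simp add: mv_def sum_unitI fun_eq_iff)

lemma bil_unitI: "a < 22 \<Longrightarrow> b < 22 \<Longrightarrow> bil d (unitI a) (unitI b) = gram d a b"
  by (simp add: bil_def sum_unitI sum_unitI')

lemma bil_mv_unit: "a < 22 \<Longrightarrow> b < 22 \<Longrightarrow>
   bil d (mv g (unitI a)) (mv g (unitI b)) = (\<Sum>i<22. \<Sum>j<22. g i a * gram d i j * g j b)"
  by (simp add: mv_unitI bil_def)

lemma quad:
  fixes f c g :: "nat \<Rightarrow> nat \<Rightarrow> real" and x y :: "nat \<Rightarrow> real"
  shows "(\<Sum>i<n. \<Sum>j<n. (\<Sum>a<n. f i a * x a) * c i j * (\<Sum>b<n. g j b * y b)) =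
         (\<Sum>a<n. \<Sum>b<n. x a * (\<Sum>i<n. \<Sum>j<n. f i a * c i j * g j b) * y b)"
proof -
  define T where "T = (\<lambda>i j a b. f i a * c i j * g j b * (x a * y b))"
  have "(\<Sum>i<n. \<Sum>j<n. (\<Sum>a<n. f i a * x a) * c i j * (\<Sum>b<n. g j b * y b)) =
        (\<Sum>i<n. \<Sum>j<n. \<Sum>a<n. \<Sum>b<n. T i j a b)"
    by (simp add: T_def sum_distrib_left sum_distrib_right mult_ac)
  also have "\<dots> = (\<Sum>i<n. \<Sum>a<n. \<Sum>j<n. \<Sum>b<n. T i j a b)"
    by (rule sum.cong[OF refl], rule sum.swap)
  also have "\<dots> = (\<Sum>a<n. \<Sum>i<n. \<Sum>j<n. \<Sum>b<n. T i j a b)"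
    by (rule sum.swap)
  also have "\<dots> = (\<Sum>a<n. \<Sum>i<n. \<Sum>b<n. \<Sum>j<n. T i j a b)"
    by (rule sum.cong[OF refl], rule sum.cong[OF refl], rule sum.swap)
  also have "\<dots> = (\<Sum>a<n. \<Sum>b<n. \<Sum>i<n. \<Sum>j<n. T i j a b)"
    by (rule sum.cong[OF refl], rule sum.swap)
  also have "\<dots> = (\<Sum>a<n. \<Sum>b<n. x a * (\<Sum>i<n. \<Sum>j<n. f i a * c i j * g j b) * y b)"
    by (simp add: T_def sum_distrib_left sum_distrib_right mult_ac)
  finally show ?thesis .
qed

lemma OrthN_isoR: assumes "g \<in> OrthN d" shows "isoR d (mvR g)"
proof -
  have K: "(\<Sum>i<22. \<Sum>j<22. g i a * gram d i j * g j b) = gram d a b" if "a < 22" "b < 22" for a b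
  proof -
    have "bil d (mv g (unitI a)) (mv g (unitI b)) = bil d (unitI a) (unitI b)"
      using assms unitI_lat that unfolding OrthN_def by blast
    then show ?thesis using that by (simp add: bil_mv_unit bil_unitI)
  qed
  have "bilR d (mvR g x) (mvR g y) = bilR d x y" if x: "x \<in> latR" and y: "y \<in> latR" for x y
  proof -
    have "bilR d (mvR g x) (mvR g y) = (\<Sum>i<22. \<Sum>j<22. (\<Sum>a<22. of_int (g i a) * x a) * of_int (gram d i j) * (\<Sum>b<22. of_int (g j b) * y b))"
      by (simp add: bilR_def mvR_def)
    also have "\<dots> = (\<Sum>a<22. \<Sum>b<22. x a * (\<Sum>i<22. \<Sum>j<22. of_int (g i a) * of_int (gram d i j) * of_int (g j b)) * y b)"
      by (rule quad)
    also have "\<dots> = (\<Sum>a<22. \<Sum>b<22. x a * of_int (gram d a b) * y b)"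
    proof (rule sum.cong[OF refl], rule sum.cong[OF refl])
      fix a b assume "a \<in> {..<22::nat}" "b \<in> {..<22::nat}"
      then have "(\<Sum>i<22. \<Sum>j<22. of_int (g i a) * of_int (gram d i j) * of_int (g j b)) = (of_int (gram d a b) :: real)"
        using K[of a b] by (simp flip: of_int_mult of_int_sum)
      then show "x a * (\<Sum>i<22. \<Sum>j<22. of_int (g i a) * of_int (gram d i j) * of_int (g j b)) * y b = x a * of_int (gram d a b) * y b"
        by simp
    qed
    also have "\<dots> = bilR d x y" by (simp add: bilR_def)
    finally show ?thesis .
  qed
  then show ?thesis by (simp add: isoR_def mvR_latR)
qed

lemma OrthN_decomp: assumes "d > 0" "g \<in> OrthN d" shows "\<exists>vs. decomp d (mvR g) vs"
proof -
  have B1: "\<forall>k<22. bas k \<in> latR" by (simp add: bas_latR)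
  have B2: "\<forall>k<22. bilR d (bas k) (bas k) \<noteq> 0" using bas_norm assms(1) by blast
  have B3: "\<forall>i<22. \<forall>k<22. i \<noteq> k \<longrightarrow> bilR d (bas i) (bas k) = 0" using bas_orth by blast
  have B4: "\<forall>z\<in>latR. (\<forall>k<22. bilR d z (bas k) = 0) \<longrightarrow> z = (\<lambda>i. 0)" using bas_nondeg assms(1) by blast
  show ?thesis using cartan_gen[OF B1 B2 B3 B4, where n=22, rule_format, of 0 "mvR g"] OrthN_isoR[OF assms(2)] by simp
qed


definition rowI :: "nat \<Rightarrow> (nat \<Rightarrow> int) \<Rightarrow> nat \<Rightarrow> int" where
  "rowI d z i = (\<Sum>j<22. gram d i j * z j)"

lemma bil_row: "bil d x z = (\<Sum>i<22. x i * rowI d z i)"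
  by (simp add: bil_def rowI_def sum_distrib_left mult.assoc)

lemma bilR_row: "bilR d x (ri z) = (\<Sum>i<22. x i * of_int (rowI d z i))"
  by (simp add: bilR_def rowI_def ri_def sum_distrib_left mult.assoc)

lemma rowI_unit: "k < 22 \<Longrightarrow> rowI d c k = bil d (unitI k) c"
  by (simp add: bil_row sum_unitI')

lemma bil_sym: "bil d x y = bil d y x"
  unfolding bil_def
  by (subst sum.swap) (simp add: gram_sym mult.commute mult.left_commute)

lemma rowI_0: "rowI d c 0 = (1) * c 1"
  unfolding rowI_unit[of 0, simplified] bil_explicit by (simp add: e8f_def unitI_def algebra_simps)

lemma rowI_1: "rowI d c 1 = (1) * c 0"
  using rowI_unit[of 1 d c] by (simp add: bil_explicit e8f_def unitI_def)

lemma rowI_2: "rowI d c 2 = (1) * c 3"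
  unfolding rowI_unit[of 2, simplified] bil_explicit by (simp add: e8f_def unitI_def algebra_simps)

lemma rowI_3: "rowI d c 3 = (1) * c 2"
  unfolding rowI_unit[of 3, simplified] bil_explicit by (simp add: e8f_def unitI_def algebra_simps)

lemma rowI_4: "rowI d c 4 = (-2) * c 4 + (1) * c 6"
  unfolding rowI_unit[of 4, simplified] bil_explicit by (simp add: e8f_def unitI_def algebra_simps)

lemma rowI_5: "rowI d c 5 = (-2) * c 5 + (1) * c 7"
  unfolding rowI_unit[of 5, simplified] bil_explicit by (simp add: e8f_def unitI_def algebra_simps)

lemma rowI_6: "rowI d c 6 = (1) * c 4 + (-2) * c 6 + (1) * c 7"
  unfolding rowI_unit[of 6, simplified] bil_explicit by (simp add: e8f_def unitI_def algebra_simps)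

lemma rowI_7: "rowI d c 7 = (1) * c 5 + (1) * c 6 + (-2) * c 7 + (1) * c 8"
  unfolding rowI_unit[of 7, simplified] bil_explicit by (simp add: e8f_def unitI_def algebra_simps)

lemma rowI_8: "rowI d c 8 = (1) * c 7 + (-2) * c 8 + (1) * c 9"
  unfolding rowI_unit[of 8, simplified] bil_explicit by (simp add: e8f_def unitI_def algebra_simps)

lemma rowI_9: "rowI d c 9 = (1) * c 8 + (-2) * c 9 + (1) * c 10"
  unfolding rowI_unit[of 9, simplified] bil_explicit by (simp add: e8f_def unitI_def algebra_simps)

lemma rowI_10: "rowI d c 10 = (1) * c 9 + (-2) * c 10 + (1) * c 11"
  unfolding rowI_unit[of 10, simplified] bil_explicit by (simp add: e8f_def unitI_def algebra_simps)

lemma rowI_11: "rowI d c 11 = (1) * c 10 + (-2) * c 11"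
  unfolding rowI_unit[of 11, simplified] bil_explicit by (simp add: e8f_def unitI_def algebra_simps)

lemma rowI_12: "rowI d c 12 = (-2) * c 12 + (1) * c 14"
  unfolding rowI_unit[of 12, simplified] bil_explicit by (simp add: e8f_def unitI_def algebra_simps)

lemma rowI_13: "rowI d c 13 = (-2) * c 13 + (1) * c 15"
  unfolding rowI_unit[of 13, simplified] bil_explicit by (simp add: e8f_def unitI_def algebra_simps)

lemma rowI_14: "rowI d c 14 = (1) * c 12 + (-2) * c 14 + (1) * c 15"
  unfolding rowI_unit[of 14, simplified] bil_explicit by (simp add: e8f_def unitI_def algebra_simps)

lemma rowI_15: "rowI d c 15 = (1) * c 13 + (1) * c 14 + (-2) * c 15 + (1) * c 16"
  unfolding rowI_unit[of 15, simplified] bil_explicit by (simp add: e8f_def unitI_def algebra_simps)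

lemma rowI_16: "rowI d c 16 = (1) * c 15 + (-2) * c 16 + (1) * c 17"
  unfolding rowI_unit[of 16, simplified] bil_explicit by (simp add: e8f_def unitI_def algebra_simps)

lemma rowI_17: "rowI d c 17 = (1) * c 16 + (-2) * c 17 + (1) * c 18"
  unfolding rowI_unit[of 17, simplified] bil_explicit by (simp add: e8f_def unitI_def algebra_simps)

lemma rowI_18: "rowI d c 18 = (1) * c 17 + (-2) * c 18 + (1) * c 19"
  unfolding rowI_unit[of 18, simplified] bil_explicit by (simp add: e8f_def unitI_def algebra_simps)

lemma rowI_19: "rowI d c 19 = (1) * c 18 + (-2) * c 19"
  unfolding rowI_unit[of 19, simplified] bil_explicit by (simp add: e8f_def unitI_def algebra_simps)

lemma rowI_20: "rowI d c 20 = (-2) * c 20"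
  unfolding rowI_unit[of 20, simplified] bil_explicit by (simp add: e8f_def unitI_def algebra_simps)

lemma rowI_21: "rowI d c 21 = (-2) * int d * c 21"
  unfolding rowI_unit[of 21, simplified] bil_explicit by (simp add: e8f_def unitI_def algebra_simps)

lemmas rowI_k = rowI_0 rowI_1 rowI_2 rowI_3 rowI_4 rowI_5 rowI_6 rowI_7 rowI_8 rowI_9 rowI_10 rowI_11 rowI_12 rowI_13 rowI_14 rowI_15 rowI_16 rowI_17 rowI_18 rowI_19 rowI_20 rowI_21

lemma c_inv_e8:
  shows "c 4 = (-4) * rowI d c 4 + (-5) * rowI d c 5 + (-7) * rowI d c 6 + (-10) * rowI d c 7 + (-8) * rowI d c 8 + (-6) * rowI d c 9 + (-4) * rowI d c 10 + (-2) * rowI d c 11"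
    and "c 5 = (-5) * rowI d c 4 + (-8) * rowI d c 5 + (-10) * rowI d c 6 + (-15) * rowI d c 7 + (-12) * rowI d c 8 + (-9) * rowI d c 9 + (-6) * rowI d c 10 + (-3) * rowI d c 11"
    and "c 6 = (-7) * rowI d c 4 + (-10) * rowI d c 5 + (-14) * rowI d c 6 + (-20) * rowI d c 7 + (-16) * rowI d c 8 + (-12) * rowI d c 9 + (-8) * rowI d c 10 + (-4) * rowI d c 11"
    and "c 7 = (-10) * rowI d c 4 + (-15) * rowI d c 5 + (-20) * rowI d c 6 + (-30) * rowI d c 7 + (-24) * rowI d c 8 + (-18) * rowI d c 9 + (-12) * rowI d c 10 + (-6) * rowI d c 11"
    and "c 8 = (-8) * rowI d c 4 + (-12) * rowI d c 5 + (-16) * rowI d c 6 + (-24) * rowI d c 7 + (-20) * rowI d c 8 + (-15) * rowI d c 9 + (-10) * rowI d c 10 + (-5) * rowI d c 11"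
    and "c 9 = (-6) * rowI d c 4 + (-9) * rowI d c 5 + (-12) * rowI d c 6 + (-18) * rowI d c 7 + (-15) * rowI d c 8 + (-12) * rowI d c 9 + (-8) * rowI d c 10 + (-4) * rowI d c 11"
    and "c 10 = (-4) * rowI d c 4 + (-6) * rowI d c 5 + (-8) * rowI d c 6 + (-12) * rowI d c 7 + (-10) * rowI d c 8 + (-8) * rowI d c 9 + (-6) * rowI d c 10 + (-3) * rowI d c 11"
    and "c 11 = (-2) * rowI d c 4 + (-3) * rowI d c 5 + (-4) * rowI d c 6 + (-6) * rowI d c 7 + (-5) * rowI d c 8 + (-4) * rowI d c 9 + (-3) * rowI d c 10 + (-2) * rowI d c 11"
    and "c 12 = (-4) * rowI d c 12 + (-5) * rowI d c 13 + (-7) * rowI d c 14 + (-10) * rowI d c 15 + (-8) * rowI d c 16 + (-6) * rowI d c 17 + (-4) * rowI d c 18 + (-2) * rowI d c 19"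
    and "c 13 = (-5) * rowI d c 12 + (-8) * rowI d c 13 + (-10) * rowI d c 14 + (-15) * rowI d c 15 + (-12) * rowI d c 16 + (-9) * rowI d c 17 + (-6) * rowI d c 18 + (-3) * rowI d c 19"
    and "c 14 = (-7) * rowI d c 12 + (-10) * rowI d c 13 + (-14) * rowI d c 14 + (-20) * rowI d c 15 + (-16) * rowI d c 16 + (-12) * rowI d c 17 + (-8) * rowI d c 18 + (-4) * rowI d c 19"
    and "c 15 = (-10) * rowI d c 12 + (-15) * rowI d c 13 + (-20) * rowI d c 14 + (-30) * rowI d c 15 + (-24) * rowI d c 16 + (-18) * rowI d c 17 + (-12) * rowI d c 18 + (-6) * rowI d c 19"
    and "c 16 = (-8) * rowI d c 12 + (-12) * rowI d c 13 + (-16) * rowI d c 14 + (-24) * rowI d c 15 + (-20) * rowI d c 16 + (-15) * rowI d c 17 + (-10) * rowI d c 18 + (-5) * rowI d c 19"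
    and "c 17 = (-6) * rowI d c 12 + (-9) * rowI d c 13 + (-12) * rowI d c 14 + (-18) * rowI d c 15 + (-15) * rowI d c 16 + (-12) * rowI d c 17 + (-8) * rowI d c 18 + (-4) * rowI d c 19"
    and "c 18 = (-4) * rowI d c 12 + (-6) * rowI d c 13 + (-8) * rowI d c 14 + (-12) * rowI d c 15 + (-10) * rowI d c 16 + (-8) * rowI d c 17 + (-6) * rowI d c 18 + (-3) * rowI d c 19"
    and "c 19 = (-2) * rowI d c 12 + (-3) * rowI d c 13 + (-4) * rowI d c 14 + (-6) * rowI d c 15 + (-5) * rowI d c 16 + (-4) * rowI d c 17 + (-3) * rowI d c 18 + (-2) * rowI d c 19"
  by (simp_all only: rowI_k) (simp_all add: algebra_simps)


lemma I2_prim_vec: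
  assumes "L \<in> I2 d"
  shows "\<exists>c\<in>L. c \<in> lat \<and> c 21 = 0 \<and> (\<forall>q. (\<forall>j<22. q dvd c j) \<longrightarrow> q dvd 1)"
proof -
  obtain e f where ef: "e \<in> lat" "f \<in> lat"
    and indep: "\<forall>a b. (\<lambda>i. a * e i + b * f i) = (\<lambda>i. 0) \<longrightarrow> a = 0 \<and> b = 0"
    and Ld: "L = {(\<lambda>i. a * e i + b * f i) | a b. True}"
    and prim: "\<forall>x\<in>lat. \<forall>k::int. k \<noteq> 0 \<and> (\<lambda>i. k * x i) \<in> L \<longrightarrow> x \<in> L"
    using assms unfolding I2_def by blast
  obtain \<alpha> \<beta> where ab: "\<alpha> \<noteq> 0 \<or> \<beta> \<noteq> 0" and c21: "\<alpha> * e 21 + \<beta> * f 21 = 0"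
  proof (cases "e 21 = 0 \<and> f 21 = 0")
    case True
    then show ?thesis using that[of 1 0] by simp
  next
    case False
    then show ?thesis using that[of "f 21" "- e 21"] by (auto simp: algebra_simps)
  qed
  define c' where "c' = (\<lambda>i. \<alpha> * e i + \<beta> * f i)"
  have c'L: "c' \<in> L" unfolding c'_def Ld by blast
  have c'lat: "c' \<in> lat" using ef by (simp add: c'_def lat_def)
  have c'21: "c' 21 = 0" using c21 by (simp add: c'_def)
  have c'nz: "c' \<noteq> (\<lambda>i. 0)" using indep ab unfolding c'_def by blast
  define g0 where "g0 = Gcd (c' ` {..<22})"
  have g0d: "g0 dvd c' j" if "j < 22" for j using that by (simp add: g0_def)
  have g0nz: "g0 \<noteq> 0"
  proof
    assume "g0 = 0"
    then have "c' ` {..<22} \<subseteq> {0}" by (simp add: g0_def Gcd_0_iff)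
    then have "c' i = 0" for i using c'lat by (cases "i < 22") (auto simp: lat_def)
    then show False using c'nz by auto
  qed
  define c where "c = (\<lambda>i. c' i div g0)"
  have cc': "c' i = g0 * c i" for i
  proof (cases "i < 22")
    case True then show ?thesis using g0d[OF True] by (simp add: c_def)
  next
    case False then show ?thesis using c'lat by (simp add: c_def lat_def)
  qed
  have clat: "c \<in> lat" using c'lat by (simp add: c_def lat_def)
  have "(\<lambda>i. g0 * c i) \<in> L" using c'L cc' by (metis ext)
  then have cL: "c \<in> L" using prim clat g0nz by blast
  have c21': "c 21 = 0" using c'21 by (simp add: c_def)
  have cp: "\<forall>q. (\<forall>j<22. q dvd c j) \<longrightarrow> q dvd 1"
  proof (intro allI impI)
    fix q assume q: "\<forall>j<22. q dvd c j"
    have "q * g0 dvd c' j" if "j < 22" for j using q that cc' by (simp add: mult.commute)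
    then have "q * g0 dvd g0" unfolding g0_def by (intro Gcd_greatest) auto
    then have "q * g0 dvd 1 * g0" by simp
    then show "q dvd 1" using g0nz dvd_times_right_cancel_iff by blast
  qed
  show ?thesis using cL clat c21' cp by blast
qed

lemma bezout_Gcd: "\<exists>u. (\<Sum>i<n. v i * u i) = Gcd ((v :: nat \<Rightarrow> int) ` {..<n})"
proof (induction n)
  case 0 then show ?case by simp
next
  case (Suc n)
  then obtain u where u: "(\<Sum>i<n. v i * u i) = Gcd (v ` {..<n})" by blast
  obtain s t where st: "s * v n + t * Gcd (v ` {..<n}) = gcd (v n) (Gcd (v ` {..<n}))"
    using bezout_int by blast
  define u' where "u' = (\<lambda>i. if i = n then s else t * u i)"
  have "(\<Sum>i<Suc n. v i * u' i) = (\<Sum>i<n. v i * u' i) + v n * s" by (simp add: u'_def)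
  also have "(\<Sum>i<n. v i * u' i) = t * (\<Sum>i<n. v i * u i)"
    by (simp add: u'_def sum_distrib_left mult_ac)
  finally have "(\<Sum>i<Suc n. v i * u' i) = gcd (v n) (Gcd (v ` {..<n}))" using u st by (simp add: algebra_simps)
  also have "\<dots> = Gcd (v ` {..<Suc n})" by (simp add: lessThan_Suc Gcd_insert)
  finally show ?case by blast
qed

lemma dvd2_from:
  fixes a :: int
  assumes h: "\<forall>j<22. a dvd 2 * c j" and p: "\<forall>q. (\<forall>j<22. q dvd c j) \<longrightarrow> q dvd 1"
  shows "a dvd 2"
proof (cases "even a")
  case True
  then obtain b where b: "a = 2 * b" by blast
  have "\<forall>j<22. b dvd c j" using h b by (simp add: mult_dvd_mono)
  then have "b dvd 1" using p by blast
  then show ?thesis using b by simp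
next
  case False
  then have cop: "coprime a 2" using coprime_left_2_iff_odd coprime_commute by blast
  have "\<forall>j<22. a dvd c j" using h cop by (simp add: coprime_dvd_mult_right_iff)
  then have "a dvd 1" using p by blast
  then show ?thesis using dvd_trans[of a 1 2] by simp
qed


lemma find_y:
  assumes clat: "c \<in> lat" and c21: "c 21 = 0" and cp: "\<forall>q. (\<forall>j<22. q dvd c j) \<longrightarrow> q dvd 1"
  shows "\<exists>a y. (a = 1 \<or> a = 2) \<and> y \<in> lat \<and> bil d c y = a \<and> (\<forall>j<22. a dvd rowI d c j)"
proof -
  define a where "a = Gcd (rowI d c ` {..<22})"
  have ad: "a dvd rowI d c i" if "i < 22" for i using that by (simp add: a_def)
  have d0: "a dvd c 0" using ad[of 1] rowI_1[of d c] by simp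
  have d1: "a dvd c 1" using ad[of 0] by (simp add: rowI_0)
  have d2: "a dvd c 2" using ad[of 3] by (simp add: rowI_3)
  have d3: "a dvd c 3" using ad[of 2] by (simp add: rowI_2)
  have d4: "a dvd c 4" by (subst c_inv_e8(1)[where c=c and d=d]) (intro dvd_add dvd_mult ad; simp)
  have d5: "a dvd c 5" by (subst c_inv_e8(2)[where c=c and d=d]) (intro dvd_add dvd_mult ad; simp)
  have d6: "a dvd c 6" by (subst c_inv_e8(3)[where c=c and d=d]) (intro dvd_add dvd_mult ad; simp)
  have d7: "a dvd c 7" by (subst c_inv_e8(4)[where c=c and d=d]) (intro dvd_add dvd_mult ad; simp)
  have d8: "a dvd c 8" by (subst c_inv_e8(5)[where c=c and d=d]) (intro dvd_add dvd_mult ad; simp)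
  have d9: "a dvd c 9" by (subst c_inv_e8(6)[where c=c and d=d]) (intro dvd_add dvd_mult ad; simp)
  have d10: "a dvd c 10" by (subst c_inv_e8(7)[where c=c and d=d]) (intro dvd_add dvd_mult ad; simp)
  have d11: "a dvd c 11" by (subst c_inv_e8(8)[where c=c and d=d]) (intro dvd_add dvd_mult ad; simp)
  have d12: "a dvd c 12" by (subst c_inv_e8(9)[where c=c and d=d]) (intro dvd_add dvd_mult ad; simp)
  have d13: "a dvd c 13" by (subst c_inv_e8(10)[where c=c and d=d]) (intro dvd_add dvd_mult ad; simp)
  have d14: "a dvd c 14" by (subst c_inv_e8(11)[where c=c and d=d]) (intro dvd_add dvd_mult ad; simp)
  have d15: "a dvd c 15" by (subst c_inv_e8(12)[where c=c and d=d]) (intro dvd_add dvd_mult ad; simp)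
  have d16: "a dvd c 16" by (subst c_inv_e8(13)[where c=c and d=d]) (intro dvd_add dvd_mult ad; simp)
  have d17: "a dvd c 17" by (subst c_inv_e8(14)[where c=c and d=d]) (intro dvd_add dvd_mult ad; simp)
  have d18: "a dvd c 18" by (subst c_inv_e8(15)[where c=c and d=d]) (intro dvd_add dvd_mult ad; simp)
  have d19: "a dvd c 19" by (subst c_inv_e8(16)[where c=c and d=d]) (intro dvd_add dvd_mult ad; simp)
  have d20: "a dvd 2 * c 20" using ad[of 20] by (simp add: rowI_20)
  have "\<forall>j<22. a dvd 2 * c j"
    unfolding all22 using c21 d0 d1 d2 d3 d4 d5 d6 d7 d8 d9 d10 d11 d12 d13 d14 d15 d16 d17 d18 d19 d20
    by simp
  then have a2: "a dvd 2" using cp by (rule dvd2_from)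
  have a0: "a \<ge> 0" by (simp add: a_def Gcd_int_greater_eq_0)
  have "a \<noteq> 0" using a2 by auto
  moreover have "a \<le> 2" using dvd_imp_le_int[OF _ a2] a0 by simp
  ultimately have a12: "a = 1 \<or> a = 2" using a0 by auto
  obtain u where u: "(\<Sum>i<22. rowI d c i * u i) = a" using bezout_Gcd[where n=22 and v="rowI d c"] a_def by auto
  define y where "y = (\<lambda>j. if j < 22 then u j else 0)"
  have ylat: "y \<in> lat" by (simp add: y_def lat_def)
  have "bil d c y = bil d y c" by (rule bil_sym)
  also have "\<dots> = (\<Sum>i<22. rowI d c i * u i)" unfolding bil_row by (rule sum.cong) (auto simp: y_def mult.commute)
  finally have "bil d c y = a" using u by simp
  then show ?thesis using a12 ylat ad by blast
qed


lemma bilR_pl: "bilR d (\<lambda>i. u i + s * v i) z = bilR d u z + s * bilR d v z"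
  using bilR_lin[of d 1 u s v z] by simp
lemma bilR_pr: "bilR d z (\<lambda>i. u i + s * v i) = bilR d z u + s * bilR d z v"
  by (metis bilR_pl bilR_sym)

lemma hyper:
  fixes u v x :: "nat \<Rightarrow> real" and A :: real
  assumes vv: "bilR d v v = 0" and uv: "bilR d u v = A" and A0: "A \<noteq> 0"
  defines "t \<equiv> (1 - bilR d u u) / (2*A)"
  defines "t' \<equiv> - bilR d u u / A - (1 - bilR d u u)/(2*A)"
  defines "p1 \<equiv> (\<lambda>i. u i + t * v i)" and "p2 \<equiv> (\<lambda>i. u i + t' * v i)"
  shows "bilR d p1 p1 = 1" "bilR d p2 p2 = -1" "bilR d p1 p2 = 0"
    "reflR d p1 (reflR d p2 x) = (\<lambda>i. x i - ((2*A*bilR d x u - 2*bilR d x v * bilR d u u)/(A*A)) * v i - (2*bilR d x v/A) * u i)"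
proof -
  have vu: "bilR d v u = A" using uv bilR_sym by metis
  have gen: "bilR d (\<lambda>i. u i + s * v i) (\<lambda>i. u i + s' * v i) = bilR d u u + (s + s') * A" for s s'
    by (simp add: bilR_pl bilR_pr vv uv vu algebra_simps)
  show 1: "bilR d p1 p1 = 1" unfolding p1_def gen t_def using A0 by (simp add: field_simps)
  show 2: "bilR d p2 p2 = -1" unfolding p2_def gen t'_def using A0 by (simp add: field_simps)
  show 3: "bilR d p1 p2 = 0" unfolding p1_def p2_def gen t_def t'_def using A0 by (simp add: field_simps)
  have 4: "bilR d p2 p1 = 0" using 3 bilR_sym by metis
  have xp1: "bilR d x p1 = bilR d x u + t * bilR d x v" unfolding p1_def by (rule bilR_pr)
  have xp2: "bilR d x p2 = bilR d x u + t' * bilR d x v" unfolding p2_def by (rule bilR_pr)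
  have zp1: "bilR d (reflR d p2 x) p1 = bilR d x p1" by (simp add: refl_bil 4)
  have "reflR d p1 (reflR d p2 x) = (\<lambda>i. x i + 2 * bilR d x p2 * p2 i - 2 * bilR d x p1 * p1 i)"
    unfolding reflR_def[of d p1] zp1 1 by (simp add: reflR_def 2)
  also have "\<dots> = (\<lambda>i. x i - ((2*A*bilR d x u - 2*bilR d x v * bilR d u u)/(A*A)) * v i - (2*bilR d x v/A) * u i)"
    unfolding xp1 xp2 unfolding p1_def p2_def t_def t'_def using A0
    by (simp add: fun_eq_iff field_simps)
  finally show "reflR d p1 (reflR d p2 x) = (\<lambda>i. x i - ((2*A*bilR d x u - 2*bilR d x v * bilR d u u)/(A*A)) * v i - (2*bilR d x v/A) * u i)" .
qed

lemma refl_comm: assumes "bilR d u v = 0"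
  shows "reflR d u (reflR d v x) = reflR d v (reflR d u x)"
proof -
  have vu: "bilR d v u = 0" using assms bilR_sym by metis
  show ?thesis by (simp add: reflR_def[of d u "reflR d v x"] reflR_def[of d v "reflR d u x"] refl_bil assms vu)
                  (simp add: reflR_def fun_eq_iff algebra_simps)
qed


definition Aint :: "nat \<Rightarrow> (nat \<Rightarrow> int) \<Rightarrow> (nat \<Rightarrow> int) \<Rightarrow> int \<Rightarrow> nat \<Rightarrow> int" where
  "Aint d c y a j = (2*a*rowI d y j - 2*rowI d c j * bil d y y) div (a*a)"
definition Bint :: "nat \<Rightarrow> (nat \<Rightarrow> int) \<Rightarrow> int \<Rightarrow> nat \<Rightarrow> int" where
  "Bint d c a j = (2*rowI d c j) div a"

definition hmat :: "nat \<Rightarrow> (nat \<Rightarrow> int) \<Rightarrow> (nat \<Rightarrow> int) \<Rightarrow> int \<Rightarrow> nat \<Rightarrow> nat \<Rightarrow> int" where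
  "hmat d c y a = (\<lambda>i j. if i < 22 \<and> j < 22 then (if i = j then 1 else 0) - Aint d c y a j * c i - Bint d c a j * y i else 0)"

lemma Aint_real:
  assumes a: "a = 1 \<or> a = 2" and ad: "\<forall>j<22. a dvd rowI d c j" and j: "j < 22"
  shows "real_of_int (Aint d c y a j) = (2 * of_int a * of_int (rowI d y j) - 2 * of_int (rowI d c j) * of_int (bil d y y)) / (of_int a * of_int a)"
proof -
  have "a * a dvd 2*a*rowI d y j - 2*rowI d c j * bil d y y"
  proof (cases "a = 1")
    case True then show ?thesis by simp
  next
    case False
    then have a2: "a = 2" using a by simp
    then obtain k where "rowI d c j = 2 * k" using ad j by (metis dvd_def)
    then have "2*a*rowI d y j - 2*rowI d c j * bil d y y = (a*a) * (rowI d y j - k * bil d y y)"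
      using a2 by (simp add: algebra_simps)
    then show ?thesis by simp
  qed
  then show ?thesis unfolding Aint_def by (simp add: real_of_int_div)
qed

lemma Bint_real:
  assumes a: "a = 1 \<or> a = 2"
  shows "real_of_int (Bint d c a j) = 2 * of_int (rowI d c j) / of_int a"
proof -
  have "a dvd 2*rowI d c j" using a by auto
  then show ?thesis unfolding Bint_def by (simp add: real_of_int_div)
qed

lemma mvR_hmat:
  assumes a: "a = 1 \<or> a = 2" and ad: "\<forall>j<22. a dvd rowI d c j"
    and clat: "c \<in> lat" and ylat: "y \<in> lat" and x: "x \<in> latR"
  shows "mvR (hmat d c y a) x = (\<lambda>i. x i - ((2*of_int a*bilR d x (ri y) - 2*bilR d x (ri c) * of_int (bil d y y))/(of_int a*of_int a)) * ri c i - (2*bilR d x (ri c)/of_int a) * ri y i)"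
proof
  fix i
  define A where "A = (real_of_int a)"
  define YY where "YY = real_of_int (bil d y y)"
  have A0: "A \<noteq> 0" using a by (auto simp: A_def)
  show "mvR (hmat d c y a) x i = x i - ((2*of_int a*bilR d x (ri y) - 2*bilR d x (ri c) * of_int (bil d y y))/(of_int a*of_int a)) * ri c i - (2*bilR d x (ri c)/of_int a) * ri y i"
  proof (cases "i < 22")
    case False
    then show ?thesis using clat ylat x by (simp add: mvR_def lat_def latR_def ri_def)
  next
    case True
    have "mvR (hmat d c y a) x i = (\<Sum>j<22. of_int (hmat d c y a i j) * x j)" using True by (simp add: mvR_def)
    also have "\<dots> = (\<Sum>j<22. (if i = j then x j else 0)
        - of_int (c i) * ((2 * A * of_int (rowI d y j) - 2 * of_int (rowI d c j) * YY) / (A * A) * x j)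
        - of_int (y i) * (2 / A * (x j * of_int (rowI d c j))))"
      using True
      by (intro sum.cong refl) (auto simp: hmat_def Aint_real[OF a ad] Bint_real[OF a] A_def YY_def algebra_simps)
    also have "\<dots> = x i - of_int (c i) * (\<Sum>j<22. (2 * A * of_int (rowI d y j) - 2 * of_int (rowI d c j) * YY) / (A * A) * x j)
        - of_int (y i) * (2 / A * (\<Sum>j<22. x j * of_int (rowI d c j)))"
      using True by (simp add: sum_subtractf sum.delta sum_distrib_left)
    also have "(\<Sum>j<22. (2 * A * of_int (rowI d y j) - 2 * of_int (rowI d c j) * YY) / (A * A) * x j)
       = (2 * A * (\<Sum>j<22. x j * of_int (rowI d y j)) - 2 * (\<Sum>j<22. x j * of_int (rowI d c j)) * YY) / (A * A)"
      using A0 by (simp add: sum_divide_distrib sum_subtractf sum_distrib_left sum_distrib_right algebra_simps diff_divide_distrib)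
    finally show ?thesis unfolding bilR_row by (simp add: A_def YY_def ri_def mult_ac)
  qed
qed


lemma ri_lat: "x \<in> lat \<Longrightarrow> ri x \<in> latR" by (rule ri_latR)

lemma h_props:
  assumes a: "a = 1 \<or> a = 2" and ad: "\<forall>j<22. a dvd rowI d c j"
    and clat: "c \<in> lat" and ylat: "y \<in> lat" and cc: "bil d c c = 0" and cy: "bil d c y = a"
  shows "hmat d c y a \<in> OrthN d"
    and "\<exists>vs. decomp d (mvR (hmat d c y a)) vs \<and> (\<Prod>v\<leftarrow>vs. - bilR d v v / 2) < 0"
    and "\<And>z. z \<in> lat \<Longrightarrow> bil d z c = 0 \<Longrightarrow> mv (hmat d c y a) z = (\<lambda>i. z i - ((2 div a) * bil d z y) * c i)"
    and "\<And>z. z \<in> lat \<Longrightarrow> mv (hmat d c y a) (mv (hmat d c y a) z) = z"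
proof -
  define h where "h = hmat d c y a"
  define A where "A = real_of_int a"
  define u where "u = ri y"
  define v where "v = ri c"
  have A0: "A \<noteq> 0" using a by (auto simp: A_def)
  have vv: "bilR d v v = 0" using cc by (simp add: v_def bilR_ri)
  have uv: "bilR d u v = A" using cy bil_sym[of d y c] by (simp add: u_def v_def bilR_ri A_def)
  have uu: "bilR d u u = of_int (bil d y y)" by (simp add: u_def bilR_ri)
  define p1 where "p1 = (\<lambda>i. u i + (1 - bilR d u u) / (2*A) * v i)"
  define p2 where "p2 = (\<lambda>i. u i + (- bilR d u u / A - (1 - bilR d u u)/(2*A)) * v i)"
  note hy = hyper[OF vv uv A0, folded p1_def p2_def]
  have p11: "bilR d p1 p1 = 1" and p22: "bilR d p2 p2 = -1" and p12: "bilR d p1 p2 = 0"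
    using hy by auto
  have p21: "bilR d p2 p1 = 0" using p12 bilR_sym by metis
  have ulat: "u \<in> latR" and vlat: "v \<in> latR" using ylat clat by (simp_all add: u_def v_def ri_latR)
  have p1l: "p1 \<in> latR" and p2l: "p2 \<in> latR" using ulat vlat by (simp_all add: p1_def p2_def latR_def)
  have hR: "mvR h x = reflR d p1 (reflR d p2 x)" if x: "x \<in> latR" for x
    unfolding h_def hy(4)[of x] mvR_hmat[OF a ad clat ylat x]
    by (simp add: A_def u_def v_def bilR_ri)
  have n1: "bilR d p1 p1 \<noteq> 0" and n2: "bilR d p2 p2 \<noteq> 0" using p11 p22 by simp_all
  have iso: "bil d (mv h x) (mv h z) = bil d x z" if "x \<in> lat" "z \<in> lat" for x z
  proof -
    have "real_of_int (bil d (mv h x) (mv h z)) = bilR d (mvR h (ri x)) (mvR h (ri z))"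
      by (simp add: bilR_ri mvR_ri)
    also have "\<dots> = bilR d (ri x) (ri z)" using that ri_latR
      by (simp add: hR refl_iso n1 n2)
    also have "\<dots> = real_of_int (bil d x z)" by (simp add: bilR_ri)
    finally show ?thesis by simp
  qed
  have invol: "mv h (mv h x) = x" if "x \<in> lat" for x
  proof -
    have "ri (mv h (mv h x)) = mvR h (mvR h (ri x))" by (simp add: mvR_ri)
    also have "\<dots> = reflR d p1 (reflR d p2 (reflR d p1 (reflR d p2 (ri x))))"
    proof -
      have rx: "ri x \<in> latR" using that by (rule ri_latR)
      have "mvR h (mvR h (ri x)) = reflR d p1 (reflR d p2 (mvR h (ri x)))" by (rule hR[OF mvR_latR])
      then show ?thesis by (simp add: hR[OF rx])
    qed
    also have "reflR d p2 (reflR d p1 (reflR d p2 (ri x))) = reflR d p1 (reflR d p2 (reflR d p2 (ri x)))"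
      using refl_comm[OF p21] by simp
    also have "reflR d p1 (reflR d p1 (reflR d p2 (reflR d p2 (ri x)))) = ri x"
      by (simp add: refl_invol n1 n2)
    finally show ?thesis by (rule ri_inj)
  qed
  show "\<And>z. z \<in> lat \<Longrightarrow> mv (hmat d c y a) (mv (hmat d c y a) z) = z" using invol h_def by simp
  have bij: "bij_betw (mv h) lat lat"
    by (rule bij_betw_byWitness[where f'="mv h"]) (auto simp: invol mv_lat)
  show "hmat d c y a \<in> OrthN d"
    using bij iso unfolding OrthN_def h_def by (auto simp: hmat_def)
  have dec: "decomp d (mvR h) [p1, p2]"
    using p1l p2l n1 n2 hR by (simp add: decomp_def)
  have "(\<Prod>v\<leftarrow>[p1, p2]. - bilR d v v / 2) < 0" using p11 p22 by simp
  then show "\<exists>vs. decomp d (mvR (hmat d c y a)) vs \<and> (\<Prod>v\<leftarrow>vs. - bilR d v v / 2) < 0"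
    using dec h_def by blast
  fix z assume z: "z \<in> lat" and zc: "bil d z c = 0"
  have "ri (mv h z) = mvR h (ri z)" by (simp add: mvR_ri)
  also have "\<dots> = ri (\<lambda>i. z i - ((2 div a) * bil d z y) * c i)"
  proof -
    have b1: "bilR d (ri z) (ri y) = of_int (bil d z y)" and b2: "bilR d (ri z) (ri c) = 0"
      using zc by (simp_all add: bilR_ri)
    show ?thesis
      unfolding h_def mvR_hmat[OF a ad clat ylat ri_latR[OF z]] b1 b2
      using a by (auto simp: ri_def fun_eq_iff field_simps)
  qed
  finally show "mv (hmat d c y a) z = (\<lambda>i. z i - ((2 div a) * bil d z y) * c i)"
    unfolding h_def by (rule ri_inj)
qed


lemma I2_lat: "L \<in> I2 d \<Longrightarrow> L \<subseteq> lat"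
  unfolding I2_def lat_def by auto

lemma I2_iso: "L \<in> I2 d \<Longrightarrow> x \<in> L \<Longrightarrow> z \<in> L \<Longrightarrow> bil d x z = 0"
  unfolding I2_def by blast

lemma I2_comb: assumes "L \<in> I2 d" "z \<in> L" "w \<in> L" shows "(\<lambda>i. z i - k * w i) \<in> L"
proof -
  obtain e f where Ld: "L = {(\<lambda>i. a * e i + b * f i) | a b. True}"
    using assms(1) unfolding I2_def by blast
  obtain a1 b1 where z: "z = (\<lambda>i. a1 * e i + b1 * f i)" using assms(2) Ld by blast
  obtain a2 b2 where w: "w = (\<lambda>i. a2 * e i + b2 * f i)" using assms(3) Ld by blast
  have "(\<lambda>i. z i - k * w i) = (\<lambda>i. (a1 - k * a2) * e i + (b1 - k * b2) * f i)"
    by (simp add: z w fun_eq_iff algebra_simps)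
  then show ?thesis using Ld by blast
qed

lemma stab_neg:
  assumes "L \<in> I2 d"
  shows "\<exists>h\<in>OrthN d. mv h ` L = L \<and> (\<exists>vs. decomp d (mvR h) vs \<and> (\<Prod>v\<leftarrow>vs. - bilR d v v / 2) < 0)"
proof -
  obtain c where cL: "c \<in> L" and clat: "c \<in> lat" and c21: "c 21 = 0"
    and cp: "\<forall>q. (\<forall>j<22. q dvd c j) \<longrightarrow> q dvd 1"
    using I2_prim_vec[OF assms] by blast
  obtain a y where a: "a = 1 \<or> a = 2" and ylat: "y \<in> lat" and cy: "bil d c y = a"
    and ad: "\<forall>j<22. a dvd rowI d c j"
    using find_y[OF clat c21 cp, of d] by blast
  have cc: "bil d c c = 0" using I2_iso[OF assms cL cL] .
  note hp = h_props[OF a ad clat ylat cc cy]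
  define h where "h = hmat d c y a"
  have Llat: "L \<subseteq> lat" using I2_lat[OF assms] .
  have sub: "mv h z \<in> L" if "z \<in> L" for z
  proof -
    have "mv h z = (\<lambda>i. z i - ((2 div a) * bil d z y) * c i)"
      unfolding h_def using hp(3) that Llat I2_iso[OF assms that cL] by blast
    then show ?thesis using I2_comb[OF assms that cL] by simp
  qed
  have "mv h ` L = L"
  proof
    show "mv h ` L \<subseteq> L" using sub by blast
    show "L \<subseteq> mv h ` L"
    proof
      fix z assume z: "z \<in> L"
      have "z = mv h (mv h z)" unfolding h_def using hp(4) z Llat by auto
      then show "z \<in> mv h ` L" using sub[OF z] by blast
    qed
  qed
  then show ?thesis using hp(1,2) h_def by blast
qed

lemma key:
  assumes d: "d > 0" and L: "L \<in> I2 d" and g: "g \<in> OrthN d"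
  shows "\<exists>q\<in>OrthPlusN d. mv q ` L = mv g ` L"
proof -
  obtain vs where vs: "decomp d (mvR g) vs" using OrthN_decomp[OF d g] by blast
  have nz: "(\<Prod>v\<leftarrow>vs. - bilR d v v / 2) \<noteq> 0"
    using vs by (auto simp: decomp_def prod_list_zero_iff)
  show ?thesis
  proof (cases "(\<Prod>v\<leftarrow>vs. - bilR d v v / 2) > 0")
    case True
    then have "g \<in> OrthPlusN d" using g vs unfolding OrthPlusN_def decomp_def by blast
    then show ?thesis by blast
  next
    case False
    then have neg: "(\<Prod>v\<leftarrow>vs. - bilR d v v / 2) < 0" using nz by linarith
    obtain h ws where h: "h \<in> OrthN d" "mv h ` L = L" and ws: "decomp d (mvR h) ws"
      and wneg: "(\<Prod>v\<leftarrow>ws. - bilR d v v / 2) < 0"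
      using stab_neg[OF L] by blast
    have "(\<Prod>v\<leftarrow>vs @ ws. - bilR d v v / 2) > 0" using neg wneg by (simp add: mult_neg_neg)
    then have q: "mmul g h \<in> OrthPlusN d" using mmul_OrthPlusN_gen[OF g h(1) vs ws] by blast
    have "mv (mmul g h) ` L = mv g ` (mv h ` L)" by (simp add: mv_mmul image_image)
    then show ?thesis using q h(2) by auto
  qed
qed

lemma OrthPlusN_sub: "OrthPlusN d \<subseteq> OrthN d" by (auto simp: OrthPlusN_def)

lemma orbrel_refl: "L \<in> I2 d \<Longrightarrow> (L, L) \<in> orbrel d (OrthPlusN d)"
proof -
  assume L: "L \<in> I2 d"
  have "mv idm ` L = L" using I2_lat[OF L] mv_idm by (simp add: subset_iff image_iff)
  then show ?thesis using L idm_OrthPlusN unfolding orbrel_def by blast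
qed

lemma orbrel_refl': "L \<in> I2 d \<Longrightarrow> (L, L) \<in> orbrel d (OrthN d)"
  using orbrel_refl OrthPlusN_sub unfolding orbrel_def by blast

lemma orbrel_trans:
  assumes H: "\<And>g h. g \<in> H \<Longrightarrow> h \<in> H \<Longrightarrow> mmul g h \<in> H"
    and "(L1, L2) \<in> orbrel d H" "(L2, L3) \<in> orbrel d H"
  shows "(L1, L3) \<in> orbrel d H"
proof -
  obtain g where g: "g \<in> H" "mv g ` L1 = L2" and L1: "L1 \<in> I2 d" using assms(2) unfolding orbrel_def by blast
  obtain h where h: "h \<in> H" "mv h ` L2 = L3" and L3: "L3 \<in> I2 d" using assms(3) unfolding orbrel_def by blast
  have "mv (mmul h g) ` L1 = L3" using g h by (simp add: mv_mmul image_image[symmetric])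
  then show ?thesis using H[OF h(1) g(1)] L1 L3 unfolding orbrel_def by blast
qed

lemma trans_plus: "(L1, L2) \<in> orbrel d (OrthPlusN d) \<Longrightarrow> (L2, L3) \<in> orbrel d (OrthPlusN d) \<Longrightarrow> (L1, L3) \<in> orbrel d (OrthPlusN d)"
  by (rule orbrel_trans[OF mmul_OrthPlusN])
lemma trans_full: "(L1, L2) \<in> orbrel d (OrthN d) \<Longrightarrow> (L2, L3) \<in> orbrel d (OrthN d) \<Longrightarrow> (L1, L3) \<in> orbrel d (OrthN d)"
  by (rule orbrel_trans[OF mmul_OrthN])

lemma plus_full: "(L1, L2) \<in> orbrel d (OrthPlusN d) \<Longrightarrow> (L1, L2) \<in> orbrel d (OrthN d)"
  using OrthPlusN_sub unfolding orbrel_def by blast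

lemma full_plus: "d > 0 \<Longrightarrow> (L1, L2) \<in> orbrel d (OrthN d) \<Longrightarrow> (L1, L2) \<in> orbrel d (OrthPlusN d)"
proof -
  assume d: "d > 0" and r: "(L1, L2) \<in> orbrel d (OrthN d)"
  then obtain g where "g \<in> OrthN d" "mv g ` L1 = L2" "L1 \<in> I2 d" "L2 \<in> I2 d" unfolding orbrel_def by blast
  then show ?thesis using key[OF d] unfolding orbrel_def by fastforce
qed

lemma fR: assumes "L \<in> I2 d"
  shows "orbrel d (OrthN d) `` (orbrel d (OrthPlusN d) `` {L}) = orbrel d (OrthN d) `` {L}"
proof
  show "orbrel d (OrthN d) `` (orbrel d (OrthPlusN d) `` {L}) \<subseteq> orbrel d (OrthN d) `` {L}"
    using trans_full plus_full by blast
  show "orbrel d (OrthN d) `` {L} \<subseteq> orbrel d (OrthN d) `` (orbrel d (OrthPlusN d) `` {L})"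
    using orbrel_refl[OF assms] by blast
qed

theorem mainTheorem19:
  fixes d :: nat
  assumes "d > 0" and "squarefree d"
  shows "bij_betw (\<lambda>X. orbrel d (OrthN d) `` X)
           (I2 d // orbrel d (OrthPlusN d)) (I2 d // orbrel d (OrthN d))"
proof -
  let ?R = "orbrel d (OrthN d)" and ?P = "orbrel d (OrthPlusN d)"
  have img: "(\<lambda>X. ?R `` X) ` (I2 d // ?P) = I2 d // ?R"
  proof
    show "(\<lambda>X. ?R `` X) ` (I2 d // ?P) \<subseteq> I2 d // ?R"
      by (auto simp: quotient_def fR)
    show "I2 d // ?R \<subseteq> (\<lambda>X. ?R `` X) ` (I2 d // ?P)"
    proof
      fix Y assume "Y \<in> I2 d // ?R"
      then obtain L where L: "L \<in> I2 d" and Y: "Y = ?R `` {L}" by (auto simp: quotient_def)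
      have "?P `` {L} \<in> I2 d // ?P" using L by (auto simp: quotient_def)
      moreover have "?R `` (?P `` {L}) = Y" using fR[OF L] Y by simp
      ultimately show "Y \<in> (\<lambda>X. ?R `` X) ` (I2 d // ?P)" by (metis image_eqI)
    qed
  qed
  have inj: "inj_on (\<lambda>X. ?R `` X) (I2 d // ?P)"
  proof (rule inj_onI)
    fix X Y assume "X \<in> I2 d // ?P" "Y \<in> I2 d // ?P" and eq: "?R `` X = ?R `` Y"
    then obtain L1 L2 where L1: "L1 \<in> I2 d" "X = ?P `` {L1}" and L2: "L2 \<in> I2 d" "Y = ?P `` {L2}"
      by (auto simp: quotient_def)
    have e: "?R `` {L1} = ?R `` {L2}" using eq fR[OF L1(1)] fR[OF L2(1)] L1 L2 by simp
    have "(L2, L1) \<in> ?R" using e orbrel_refl'[OF L1(1)] by blast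
    then have p21: "(L2, L1) \<in> ?P" using full_plus[OF assms(1)] by blast
    have "(L1, L2) \<in> ?R" using e orbrel_refl'[OF L2(1)] by blast
    then have p12: "(L1, L2) \<in> ?P" using full_plus[OF assms(1)] by blast
    show "X = Y" unfolding L1(2) L2(2) using p12 p21 trans_plus by blast
  qed
  show ?thesis using inj img by (simp add: bij_betw_def)
qed


end
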